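(* Assume (H-tree) and (H-brw) with some $q>4$, and fix $q'\in(4,q)$. There exist $C'>0$ and $m_0\ge1$ (depending on $q'$, $\mu$, $\theta$) such that for all $m\ge m_0$ and $\eta\in(0,1)$, \[ \mathbf P_0\Big(\max_{x\in\mathscr R^{(m)}_{\mathcal X}}\mathrm d\big(x,\mathscr R^{(m)}_{\mathcal Y}\big)\ge\eta m^{1/4}\Big)\le C'\eta^{-q'}m^{1-q'/4}(\log m)^{q'/2}, \] where $\mathscr R^{(m)}_{\mathcal X}=\{V(v):v\in\mathcal X\}\cap\widehat V_-[0,m]$ and $\mathscr R^{(m)}_{\mathcal Y}=\{V(v):v\in\mathcal Y\}\cap\widehat V_-[0,m]$.
   Context: (H-tree): $\mu$ is a probability distribution on $\mathbb N$ with mean $1$ and variance $\sigma^2\in(0,\infty)$. (H-brw) with exponent $q$: $\theta$ is a symmetric, irreducible probability distribution on $\mathbb Z^d$ with covariance $M_\theta$ and $\theta(\{y:|y|\ge r\})\le c\,r^{-q}$ for all $r>0$. Invariant tree: take an infinite spine $\mathcal X=\{\varnothing_0=\varnothing,\varnothing_1,\varnothing_2,\dots\}$ with edges $\{\varnothing_n,\varnothing_{n+1}\}$. Independently, for each $n\ge1$, with probability $\mu(i+j+1)$ the vertex $\varnothing_n$ receives $i$ extra children on the left and $j$ on the right of the spine, each the root of an independent Galton–Watson($\mu$) tree; let $\mathcal T^g_n$ be the planar tree rooted at $\varnothing_n$ formed by $\varnothing_n$ and its left extra children with their descendants, $\mathcal T^g_0=\{\varnothing_0\}$. The tree $\widehat{\mathcal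 T}_-$ is the union of the spine and the $\mathcal T^g_n$, enumerated as $\varnothing_0$, $\varnothing_1$, the vertices of $\mathcal T^g_1\setminus\{\varnothing_1\}$ in depth-first order, $\varnothing_2$, the vertices of $\mathcal T^g_2\setminus\{\varnothing_2\}$ in depth-first order, etc. $\mathcal Y=\widehat{\mathcal T}_-\setminus\{\varnothing_1,\varnothing_2,\dots\}$. Assign to each edge an independent $\theta$ displacement, $V(\varnothing)=x$, $V(u)=x+$ sum of displacements along the path from $\varnothing$ to $u$ ($\mathbf P_x$ its law); $\widehat V_-(i)=V(\widehat{\mathcal T}_-(i))$ and $\widehat V_-[0,m]=\{\widehat V_-(0),\dots,\widehat V_-(m)\}$. *)

theory Defs
  imports "HOL-Probability.Probability"
begin

definition rv :: "int ^ 'd \<Rightarrow> real ^ 'd" where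
  "rv z = (\<chi> i. real_of_int (z $ i))"

definition brw_irreducible :: "(int ^ 'd) pmf \<Rightarrow> bool" where
  "brw_irreducible \<theta> \<longleftrightarrow> (\<forall>z. \<exists>xs. set xs \<subseteq> set_pmf \<theta> \<and> sum_list xs = z)"

text \<open>Law of (number of left extra children, number of right extra children) of a
  spine vertex: P(i,j) = mu(i+j+1) (a probability law since mu has mean 1).\<close>
definition spine_pmf :: "nat pmf \<Rightarrow> (nat \<times> nat) pmf" where
  "spine_pmf \<mu> = embed_pmf (\<lambda>p. pmf \<mu> (fst p + snd p + 1))"

text \<open>Sample point: for each spine index n, (left/right children counts of spine vertex n,
  displacement of the spine edge between vertex n-1 and vertex n); for each
  Ulam--Harris label (n,w) (w nonempty, a vertex of the tree hanging to the left of spine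
  vertex n), (number of children, displacement of the edge to its parent).
  Unused coordinates are independent dummies.\<close>
type_synonym 'd bt_omega =
  "(nat \<Rightarrow> (nat \<times> nat) \<times> (int ^ 'd)) \<times> (nat \<times> nat list \<Rightarrow> nat \<times> (int ^ 'd))"

definition bt_space :: "nat pmf \<Rightarrow> (int ^ 'd) pmf \<Rightarrow> 'd bt_omega measure" where
  "bt_space \<mu> \<theta> =
     (\<Pi>\<^sub>M n\<in>UNIV. measure_pmf (pair_pmf (spine_pmf \<mu>) \<theta>))
     \<Otimes>\<^sub>M (\<Pi>\<^sub>M v\<in>UNIV. measure_pmf (pair_pmf \<mu> \<theta>))"

definition Lc :: "'d bt_omega \<Rightarrow> nat \<Rightarrow> nat" where
  "Lc \<omega> n = fst (fst (fst \<omega> n))"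

definition xi :: "'d bt_omega \<Rightarrow> nat \<Rightarrow> nat list \<Rightarrow> nat" where
  "xi \<omega> n w = fst (snd \<omega> (n, w))"

definition Dsp :: "'d bt_omega \<Rightarrow> nat \<Rightarrow> int ^ 'd" where
  "Dsp \<omega> n = snd (fst \<omega> n)"

definition Dtr :: "'d bt_omega \<Rightarrow> nat \<Rightarrow> nat list \<Rightarrow> int ^ 'd" where
  "Dtr \<omega> n w = snd (snd \<omega> (n, w))"

text \<open>Vertices: Sp n is the spine vertex n (Sp 0 is the root); Sb n w (w nonempty) is the
  vertex of T^g_n with Ulam--Harris label w below the spine vertex n.\<close>
datatype vtx = Sp nat | Sb nat "nat list"

definition in_sub :: "'d bt_omega \<Rightarrow> nat \<Rightarrow> nat list \<Rightarrow> bool" where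
  "in_sub \<omega> n w \<longleftrightarrow> 1 \<le> n \<and> w \<noteq> [] \<and> hd w < Lc \<omega> n \<and>
     (\<forall>j. 1 \<le> j \<and> j < length w \<longrightarrow> w ! j < xi \<omega> n (take j w))"

definition verts :: "'d bt_omega \<Rightarrow> vtx set" where
  "verts \<omega> = range Sp \<union> {Sb n w | n w. in_sub \<omega> n w}"

definition Yset :: "'d bt_omega \<Rightarrow> vtx set" where
  "Yset \<omega> = verts \<omega> - {Sp n | n. 1 \<le> n}"

text \<open>Exploration order: Sp 0, Sp 1, T^g_1 minus its root in depth-first (= lexicographic
  Ulam--Harris) order, Sp 2, ...\<close>
fun vless :: "vtx \<Rightarrow> vtx \<Rightarrow> bool" where
  "vless (Sp a) (Sp b) = (a < b)"
| "vless (Sp a) (Sb b w) = (a \<le> b)"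
| "vless (Sb a w) (Sp b) = (a < b)"
| "vless (Sb a w) (Sb b w') = (a < b \<or> (a = b \<and> (w, w') \<in> lexord {(x, y). x < y}))"

definition rank :: "'d bt_omega \<Rightarrow> vtx \<Rightarrow> nat" where
  "rank \<omega> v = card {u \<in> verts \<omega>. vless u v}"

fun pos :: "int ^ 'd \<Rightarrow> 'd bt_omega \<Rightarrow> vtx \<Rightarrow> int ^ 'd" where
  "pos x \<omega> (Sp n) = x + (\<Sum>k\<in>{1..n}. Dsp \<omega> k)"
| "pos x \<omega> (Sb n w) = x + (\<Sum>k\<in>{1..n}. Dsp \<omega> k) + (\<Sum>j\<in>{1..length w}. Dtr \<omega> n (take j w))"

text \<open>hat V_-[0,m]: positions of the first m+1 explored vertices.\<close>
definition visited :: "int ^ 'd \<Rightarrow> 'd bt_omega \<Rightarrow> nat \<Rightarrow> (int ^ 'd) set" where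
  "visited x \<omega> m = pos x \<omega> ` {v \<in> verts \<omega>. rank \<omega> v \<le> m}"

definition RX :: "int ^ 'd \<Rightarrow> 'd bt_omega \<Rightarrow> nat \<Rightarrow> (int ^ 'd) set" where
  "RX x \<omega> m = pos x \<omega> ` range Sp \<inter> visited x \<omega> m"

definition RY :: "int ^ 'd \<Rightarrow> 'd bt_omega \<Rightarrow> nat \<Rightarrow> (int ^ 'd) set" where
  "RY x \<omega> m = pos x \<omega> ` Yset \<omega> \<inter> visited x \<omega> m"

end

theory Submission
  imports Defs "HOL-Probability.Probability" "HOL-Real_Asymp.Real_Asymp"
begin

lemma spine_sum:
  fixes \<mu> :: "nat pmf"
  assumes mean: "measure_pmf.expectation \<mu> real = 1"
  shows "(\<integral>\<^sup>+p. ennreal (pmf \<mu> (fst p + snd p + 1)) \<partial>count_space UNIV) = 1"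
proof -
  have int: "integrable (measure_pmf \<mu>) real"
    using mean not_integrable_integral_eq by fastforce
  have bij: "bij_betw (\<lambda>(i,j). (i, i+j+1)) (UNIV::(nat\<times>nat) set) {(i,k). i < k}"
    by (rule bij_betwI[where g="\<lambda>(i,k). (i, k - i - 1)"]) auto
  have "(\<integral>\<^sup>+p. ennreal (pmf \<mu> (fst p + snd p + 1)) \<partial>count_space UNIV)
      = (\<integral>\<^sup>+p. ennreal (pmf \<mu> (snd ((\<lambda>(i,j). (i, i+j+1)) p))) \<partial>count_space UNIV)"
    by (intro nn_integral_cong) (auto simp: split_beta)
  also have "\<dots> = (\<integral>\<^sup>+p. ennreal (pmf \<mu> (snd p)) \<partial>count_space {(i,k). i < k})"
    by (rule nn_integral_bij_count_space[OF bij])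
  also have "\<dots> = (\<integral>\<^sup>+p. ennreal (pmf \<mu> (snd p)) * indicator {(i,k). i < k} p \<partial>count_space UNIV)"
    by (simp add: nn_integral_count_space_indicator)
  also have "\<dots> = (\<integral>\<^sup>+ k. \<integral>\<^sup>+ i. ennreal (pmf \<mu> (snd (i,k))) * indicator {(i,k). i < k} (i,k) \<partial>count_space UNIV \<partial>count_space UNIV)"
    by (rule nn_integral_snd_count_space[symmetric])
  also have "\<dots> = (\<integral>\<^sup>+ k. ennreal (pmf \<mu> k) * ennreal (real k) \<partial>count_space UNIV)"
  proof (intro nn_integral_cong)
    fix k :: nat
    have "(\<integral>\<^sup>+ i. ennreal (pmf \<mu> (snd (i,k))) * indicator {(i,k). i < k} (i,k) \<partial>count_space UNIV)
        = (\<integral>\<^sup>+ i. ennreal (pmf \<mu> k) * indicator {..<k} i \<partial>count_space UNIV)"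
      by (intro nn_integral_cong) (auto simp: indicator_def)
    also have "\<dots> = ennreal (pmf \<mu> k) * ennreal (real k)"
      by (simp add: nn_integral_cmult ennreal_of_nat_eq_real_of_nat)
    finally show "(\<integral>\<^sup>+ i. ennreal (pmf \<mu> (snd (i,k))) * indicator {(i,k). i < k} (i,k) \<partial>count_space UNIV) = ennreal (pmf \<mu> k) * ennreal (real k)" .
  qed
  also have "\<dots> = (\<integral>\<^sup>+ k. ennreal (real k) \<partial>measure_pmf \<mu>)"
    by (simp add: nn_integral_measure_pmf)
  also have "\<dots> = ennreal (measure_pmf.expectation \<mu> real)"
    by (rule nn_integral_eq_integral[OF int]) auto
  finally show ?thesis using mean by simp
qed

lemma pmf_spine:
  assumes mean: "measure_pmf.expectation \<mu> real = 1"
  shows "pmf (spine_pmf \<mu>) p = pmf \<mu> (fst p + snd p + 1)"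
  unfolding spine_pmf_def
  by (rule pmf_embed_pmf, simp, rule spine_sum[OF mean])


lemma pow_diff_le:
  fixes y1 y2 :: real
  assumes "0 \<le> y1" "y1 \<le> y2" "y2 \<le> 1"
  shows "y2^k - y1^k \<le> real k * (y2 - y1)"
proof (induction k)
  case 0 then show ?case by simp
next
  case (Suc k)
  have "y2^Suc k - y1^Suc k = y2 * (y2^k - y1^k) + y1^k * (y2 - y1)"
    by (simp add: algebra_simps)
  also have "\<dots> \<le> 1 * (real k * (y2 - y1)) + 1 * (y2 - y1)"
  proof (rule add_mono)
    have "y2^k - y1^k \<ge> 0" using assms by (simp add: power_mono)
    then show "y2 * (y2^k - y1^k) \<le> 1 * (real k * (y2 - y1))"
      using Suc assms by (intro mult_mono) auto
    show "y1^k * (y2 - y1) \<le> 1 * (y2 - y1)"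
      using assms by (intro mult_right_mono) (auto simp: power_le_one)
  qed
  finally show ?case by (simp add: algebra_simps)
qed

lemma pow_strict:
  fixes y :: real
  assumes "0 \<le> y" "y < 1" "2 \<le> k"
  shows "1 - y^k < real k * (1 - y)"
proof -
  obtain j where k: "k = Suc (Suc j)" using assms(3) by (metis add_2_eq_Suc le_Suc_ex)
  have a: "1 - y^(Suc j) \<le> real (Suc j) * (1 - y)"
    using pow_diff_le[of y 1 "Suc j"] assms by simp
  have b: "y^(Suc j) * (1 - y) < 1 * (1 - y)"
  proof (rule mult_strict_right_mono)
    have "y^(Suc j) \<le> y" using assms by (simp add: power_le_one mult_left_le)
    then show "y^(Suc j) < 1" using assms by simp
  qed (use assms in simp)
  have "1 - y^k = (1 - y^(Suc j)) + y^(Suc j) * (1 - y)" by (simp add: k algebra_simps)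
  also have "\<dots> < real (Suc j) * (1 - y) + 1 * (1 - y)" using a b by linarith
  finally show ?thesis by (simp add: k algebra_simps)
qed

locale mu_hyp =
  fixes \<mu> :: "nat pmf"
  assumes mean: "measure_pmf.expectation \<mu> real = 1"
    and var_pos: "measure_pmf.variance \<mu> real > 0"
begin

lemma int_real: "integrable (measure_pmf \<mu>) real"
  using mean not_integrable_integral_eq by fastforce

lemma mu0_pos: "pmf \<mu> 0 > 0"
proof (rule ccontr)
  assume "\<not> pmf \<mu> 0 > 0"
  then have z: "pmf \<mu> 0 = 0" using pmf_nonneg[of \<mu> 0] by linarith
  have ae1: "AE x in measure_pmf \<mu>. 0 \<le> real x - 1"
    unfolding AE_measure_pmf_iff
  proof
    fix x assume "x \<in> set_pmf \<mu>"
    then have "pmf \<mu> x \<noteq> 0" by (simp add: set_pmf_iff)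
    then have "x \<noteq> 0" by (metis z)
    then show "0 \<le> real x - 1" by simp
  qed
  have intd: "integrable (measure_pmf \<mu>) (\<lambda>x. real x - 1)" using int_real by auto
  have "measure_pmf.expectation \<mu> (\<lambda>x. real x - 1) = 0"
    using int_real mean by (simp add: Bochner_Integration.integral_diff)
  then have "AE x in measure_pmf \<mu>. real x - 1 = 0"
    using integral_nonneg_eq_0_iff_AE[OF intd ae1] by simp
  then have "AE x in measure_pmf \<mu>. (real x - measure_pmf.expectation \<mu> real)^2 = 0"
    by eventually_elim (simp add: mean)
  then have "measure_pmf.variance \<mu> real = measure_pmf.expectation \<mu> (\<lambda>_. 0::real)"
    by (intro integral_cong_AE) auto
  then show False using var_pos by simp
qed

lemma muK: "\<exists>K\<ge>2. pmf \<mu> K > 0"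
proof (rule ccontr)
  assume "\<not> (\<exists>K\<ge>2. pmf \<mu> K > 0)"
  then have s: "\<forall>x\<in>set_pmf \<mu>. x \<le> 1"
  proof (intro ballI)
    fix x assume a: "\<not> (\<exists>K\<ge>2. pmf \<mu> K > 0)" and "x \<in> set_pmf \<mu>"
    then have p: "pmf \<mu> x \<noteq> 0" by (simp add: set_pmf_iff)
    show "x \<le> 1"
    proof (rule ccontr)
      assume "\<not> x \<le> 1" then have "x \<ge> 2" by simp
      then have "\<not> 0 < pmf \<mu> x" using a by blast
      then show False using p pmf_nonneg[of \<mu> x] by simp
    qed
  qed
  have "AE x in measure_pmf \<mu>. (real x - measure_pmf.expectation \<mu> real)^2 = 1 - real x"
    unfolding AE_measure_pmf_iff
  proof
    fix x assume "x \<in> set_pmf \<mu>"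
    then have "x = 0 \<or> x = 1" using s by auto
    then show "(real x - measure_pmf.expectation \<mu> real)^2 = 1 - real x" by (auto simp: mean)
  qed
  then have "measure_pmf.variance \<mu> real = measure_pmf.expectation \<mu> (\<lambda>x. 1 - real x)"
    by (intro integral_cong_AE) auto
  also have "\<dots> = 0" using int_real mean by (simp add: Bochner_Integration.integral_diff)
  finally show False using var_pos by simp
qed

definition gf :: "real \<Rightarrow> real" where
  "gf y = measure_pmf.expectation \<mu> (\<lambda>k. y^k)"

lemma int_pow: "0 \<le> (y::real) \<Longrightarrow> y \<le> 1 \<Longrightarrow> integrable (measure_pmf \<mu>) (\<lambda>k. y^k)"
  by (rule measure_pmf.integrable_const_bound[where B=1], rule AE_I2) (auto simp: power_le_one)

lemma gf_lip:
  assumes "0 \<le> y1" "y1 \<le> y2" "y2 \<le> 1"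
  shows "gf y2 - gf y1 \<le> y2 - y1"
proof -
  have "gf y2 - gf y1 = measure_pmf.expectation \<mu> (\<lambda>k. y2^k - y1^k)"
    unfolding gf_def using assms by (subst Bochner_Integration.integral_diff) (auto intro!: int_pow)
  also have "\<dots> \<le> measure_pmf.expectation \<mu> (\<lambda>k. real k * (y2 - y1))"
    using assms by (intro integral_mono int_real int_pow Bochner_Integration.integrable_diff integrable_mult_left pow_diff_le) auto
  also have "\<dots> = y2 - y1" using mean by simp
  finally show ?thesis .
qed

lemma expect_ge_point:
  assumes "integrable (measure_pmf \<mu>) g" "\<And>x. 0 \<le> g x"
  shows "pmf \<mu> K * g K \<le> measure_pmf.expectation \<mu> g"
proof -
  have i: "integrable (measure_pmf \<mu>) (\<lambda>x. g K * indicator {K} x)"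
    by (rule measure_pmf.integrable_const_bound[where B="\<bar>g K\<bar>"]) (auto simp: indicator_def)
  have "measure_pmf.expectation \<mu> (\<lambda>x. g K * indicator {K} x) \<le> measure_pmf.expectation \<mu> g"
    using assms i by (intro integral_mono) (auto simp: indicator_def)
  then show ?thesis by (simp add: measure_pmf_single mult.commute)
qed

lemma gf_gt:
  assumes "0 \<le> y" "y < 1"
  shows "gf y > y"
proof -
  obtain K where K: "K \<ge> 2" "pmf \<mu> K > 0" using muK by auto
  let ?g = "\<lambda>k. y^k - 1 + real k * (1 - y)"
  have ig: "integrable (measure_pmf \<mu>) ?g"
    using assms by (intro Bochner_Integration.integrable_diff Bochner_Integration.integrable_add int_pow integrable_mult_left int_real) auto
  have g0: "\<And>k. 0 \<le> ?g k" using pow_diff_le[of y 1] assms by (simp add: algebra_simps)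
  have "0 < pmf \<mu> K * ?g K" using K pow_strict[of y K] assms by (intro mult_pos_pos) auto
  also have "\<dots> \<le> measure_pmf.expectation \<mu> ?g" by (rule expect_ge_point[OF ig g0])
  also have "\<dots> = gf y - 1 + (1 - y)"
    unfolding gf_def using assms mean
    by (simp add: Bochner_Integration.integral_add Bochner_Integration.integral_diff int_pow int_real)
  finally show ?thesis by simp
qed

lemma gf_range: "0 \<le> y \<Longrightarrow> y \<le> 1 \<Longrightarrow> 0 \<le> gf y \<and> gf y \<le> 1"
  unfolding gf_def
  by (auto intro!: integral_nonneg measure_pmf.integral_le_const int_pow simp: power_le_one)

lemma iter_to_zero:
  fixes s :: "nat \<Rightarrow> real"
  assumes s0: "\<And>N. 0 \<le> s N \<and> s N \<le> 1"
    and rec: "\<And>N. s (Suc N) \<le> 1 - gf (1 - s N)"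
    and e: "e > 0"
  shows "\<exists>N. s N < e"
proof (rule ccontr)
  assume "\<not> (\<exists>N. s N < e)"
  then have ge: "\<And>N. s N \<ge> e" by (simp add: not_less)
  have e1: "e \<le> 1" using ge[of 0] s0[of 0] by simp
  define d where "d = gf (1 - e) - (1 - e)"
  have d: "d > 0" unfolding d_def using gf_gt[of "1 - e"] e e1 by simp
  have step: "s (Suc N) \<le> s N - d" for N
  proof -
    have "gf (1 - e) - gf (1 - s N) \<le> (1 - e) - (1 - s N)"
      using gf_lip[of "1 - s N" "1 - e"] s0[of N] ge[of N] e by simp
    then show ?thesis using rec[of N] unfolding d_def by simp
  qed
  have bound: "s N \<le> 1 - real N * d" for N
  proof (induction N)
    case 0 then show ?case using s0[of 0] by simp
  next
    case (Suc N) then show ?case using step[of N] by (simp add: algebra_simps)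
  qed
  obtain N where "real N * d > 1" using d reals_Archimedean3 by blast
  then show False using bound[of N] s0[of N] by linarith
qed

end

definition reach :: "nat \<Rightarrow> (nat \<times> nat list \<Rightarrow> nat \<times> 'b) \<Rightarrow> nat \<Rightarrow> nat list \<Rightarrow> bool" where
  "reach N f a w \<longleftrightarrow> (\<exists>v. length v = N \<and> (\<forall>j<N. v!j < fst (f (a, w @ take j v))))"

lemma reach_0[simp]: "reach 0 f a w"
  unfolding reach_def by auto

lemma reach_Suc: "reach (Suc N) f a w \<longleftrightarrow> (\<exists>i<fst (f (a,w)). reach N f a (w@[i]))"
proof
  assume "reach (Suc N) f a w"
  then obtain v where v: "length v = Suc N" "\<forall>j<Suc N. v!j < fst (f (a, w @ take j v))"
    unfolding reach_def by blast
  then obtain i v' where iv: "v = i # v'" by (cases v) auto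
  have "i < fst (f (a,w))" using v(2)[rule_format, of 0] iv by simp
  moreover have "reach N f a (w@[i])"
    unfolding reach_def
  proof (intro exI[of _ v'] conjI allI impI)
    show "length v' = N" using v iv by simp
    fix j assume "j < N"
    then show "v'!j < fst (f (a, (w@[i]) @ take j v'))"
      using v(2)[rule_format, of "Suc j"] iv by simp
  qed
  ultimately show "\<exists>i<fst (f (a,w)). reach N f a (w@[i])" by blast
next
  assume "\<exists>i<fst (f (a,w)). reach N f a (w@[i])"
  then obtain i v where i: "i < fst (f (a,w))" and v: "length v = N" "\<forall>j<N. v!j < fst (f (a, (w@[i]) @ take j v))"
    unfolding reach_def by blast
  show "reach (Suc N) f a w"
    unfolding reach_def
  proof (intro exI[of _ "i#v"] conjI allI impI)
    show "length (i#v) = Suc N" using v by simp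
    fix j assume j: "j < Suc N"
    show "(i#v)!j < fst (f (a, w @ take j (i#v)))"
    proof (cases j)
      case 0 then show ?thesis using i by simp
    next
      case (Suc j') then show ?thesis using v(2)[rule_format, of j'] j by simp
    qed
  qed
qed

lemma reach_cong:
  assumes "\<And>u. f (a, w@u) = g (a, w@u)"
  shows "reach N f a w = reach N g a w"
  unfolding reach_def using assms by simp

lemma reach_meas:
  assumes "\<And>u. (a, w@u) \<in> K"
  shows "Measurable.pred (PiM K (\<lambda>_. measure_pmf pp)) (\<lambda>f. reach N f a w)"
  using assms
proof (induction N arbitrary: w)
  case 0 then show ?case by simp
next
  case (Suc N)
  have comp: "(\<lambda>f. f (a,w)) \<in> measurable (PiM K (\<lambda>_. measure_pmf pp)) (measure_pmf pp)"
    using Suc.prems[of "[]"] by (intro measurable_component_singleton) simp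
  have p1: "Measurable.pred (PiM K (\<lambda>_. measure_pmf pp)) (\<lambda>f. i < fst (f (a,w)))" for i
    by (rule measurable_compose[OF comp]) simp
  have p2: "Measurable.pred (PiM K (\<lambda>_. measure_pmf pp)) (\<lambda>f. reach N f a (w@[i]))" for i
    using Suc.prems by (intro Suc.IH) (metis append.assoc append_Cons append_Nil)
  have "Measurable.pred (PiM K (\<lambda>_. measure_pmf pp)) (\<lambda>f. \<exists>i. i < fst (f (a,w)) \<and> reach N f a (w@[i]))"
    using p1 p2 by (intro pred_intros_countable pred_intros_logic) auto
  then show ?case by (simp add: reach_Suc)
qed

abbreviation Mp :: "'a pmf \<Rightarrow> nat \<times> nat list \<Rightarrow> 'a measure" where
  "Mp pp \<equiv> (\<lambda>_. measure_pmf pp)"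

abbreviation P2 :: "'a pmf \<Rightarrow> (nat \<times> nat list \<Rightarrow> 'a) measure" where
  "P2 pp \<equiv> PiM UNIV (Mp pp)"

lemma pps2: "product_prob_space (Mp pp)"
  by (rule product_prob_spaceI) (simp add: measure_pmf.prob_space_axioms)

lemma ps2: "prob_space (P2 pp)"
  by (rule prob_space_PiM) (simp add: measure_pmf.prob_space_axioms)

lemma indep_coords: "prob_space.indep_vars (P2 pp) (Mp pp) (\<lambda>i \<omega>. \<omega> i) UNIV"
proof -
  interpret pp: product_prob_space "Mp pp" UNIV by (rule pps2)
  have "distr (P2 pp) (PiM UNIV (Mp pp)) (\<lambda>x. \<lambda>i\<in>UNIV. x i) = PiM UNIV (\<lambda>i. distr (P2 pp) (Mp pp i) (\<lambda>\<omega>. \<omega> i))"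
  proof -
    have "distr (P2 pp) (PiM UNIV (Mp pp)) (\<lambda>x. \<lambda>i\<in>UNIV. x i) = distr (P2 pp) (P2 pp) (\<lambda>x. x)"
      by (intro distr_cong) auto
    also have "\<dots> = P2 pp" by (rule distr_id)
    also have "\<dots> = PiM UNIV (\<lambda>i. distr (P2 pp) (Mp pp i) (\<lambda>\<omega>. \<omega> i))"
      by (intro PiM_cong refl) (rule pp.PiM_component[symmetric], simp)
    finally show ?thesis .
  qed
  then show ?thesis
    by (subst pp.indep_vars_iff_distr_eq_PiM) (auto intro: measurable_component_singleton)
qed

lemma gf_sums:
  assumes "mu_hyp \<mu>" "0 \<le> y" "y \<le> 1" "(\<lambda>k. pmf \<mu> k * y^k) sums x"
  shows "mu_hyp.gf \<mu> y = x"
proof -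
  interpret mu_hyp \<mu> by fact
  have "ennreal (gf y) = (\<integral>\<^sup>+k. ennreal (y^k) \<partial>measure_pmf \<mu>)"
    unfolding gf_def using assms by (intro nn_integral_eq_integral[symmetric] int_pow) auto
  also have "\<dots> = (\<integral>\<^sup>+k. ennreal (pmf \<mu> k) * ennreal (y^k) \<partial>count_space UNIV)"
    by (rule nn_integral_measure_pmf)
  also have "\<dots> = (\<Sum>k. ennreal (pmf \<mu> k * y^k))"
    using assms by (subst nn_integral_count_space_nat) (simp add: ennreal_mult)
  also have "\<dots> = ennreal x"
    using assms by (intro suminf_ennreal_eq) auto
  finally have "ennreal (gf y) = ennreal x" .
  moreover have "0 \<le> x" using sums_le[OF _ sums_zero assms(4)] assms by auto
  ultimately show ?thesis using gf_range[OF assms(2,3)] by simp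
qed

context mu_hyp
begin

fun sN :: "nat \<Rightarrow> real" where
  "sN 0 = 1"
| "sN (Suc N) = 1 - gf (1 - sN N)"

lemma sN_range: "0 \<le> sN N \<and> sN N \<le> 1"
  by (induction N) (use gf_range in auto)

lemma reach_prob:
  fixes \<theta> :: "'b pmf"
  shows "measure (P2 (pair_pmf \<mu> \<theta>)) {f \<in> space (P2 (pair_pmf \<mu> \<theta>)). reach N f a w} = sN N"
proof (induction N arbitrary: w)
  case 0
  interpret P: prob_space "P2 (pair_pmf \<mu> \<theta>)" by (rule ps2)
  show ?case by (simp add: P.prob_space)
next
  case (Suc N)
  let ?pp = "pair_pmf \<mu> \<theta>"
  let ?P = "P2 ?pp"
  interpret P: prob_space ?P by (rule ps2)
  define y where "y = 1 - sN N"
  have y: "0 \<le> y" "y \<le> 1" using sN_range[of N] by (auto simp: y_def)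
  define B where "B k = {f \<in> space ?P. fst (f (a,w)) = k \<and> (\<forall>i<k. \<not> reach N f a (w@[i]))}" for k
  define K where "K j = (case j of None \<Rightarrow> {(a,w)} | Some i \<Rightarrow> {(a, w@[i]@u) | u. True})" for j :: "nat option"
  have Kin: "(a, (w@[i]) @ u) \<in> K (Some i)" for i u by (auto simp: K_def)
  have Kdisj: "disjoint_family_on K UNIV"
    unfolding disjoint_family_on_def K_def
  proof (intro ballI impI)
    fix m n :: "nat option" assume "m \<noteq> n"
    then show "(case m of None \<Rightarrow> {(a,w)} | Some i \<Rightarrow> {(a, w@[i]@u) | u. True}) \<inter>
               (case n of None \<Rightarrow> {(a,w)} | Some i \<Rightarrow> {(a, w@[i]@u) | u. True}) = {}"
      by (cases m; cases n) auto
  qed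
  have ind: "P.indep_vars (\<lambda>j. PiM (K j) (Mp ?pp)) (\<lambda>j \<omega>. restrict (\<lambda>i. \<omega> i) (K j)) UNIV"
    by (rule P.indep_vars_restrict[OF indep_coords _ Kdisj]) auto
  define A where "A k j = (case j of None \<Rightarrow> {g \<in> space (PiM (K j) (Mp ?pp)). fst (g (a,w)) = k}
     | Some i \<Rightarrow> {g \<in> space (PiM (K j) (Mp ?pp)). \<not> reach N g a (w@[i])})" for j k
  have Asets: "A k j \<in> sets (PiM (K j) (Mp ?pp))" for k j
  proof (cases j)
    case None
    have comp: "(\<lambda>f. f (a,w)) \<in> measurable (PiM (K j) (Mp ?pp)) (measure_pmf ?pp)"
      using None by (intro measurable_component_singleton) (simp add: K_def)
    have "Measurable.pred (PiM (K j) (Mp ?pp)) (\<lambda>g. fst (g (a,w)) = k)"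
      by (rule measurable_compose[OF comp]) simp
    then show ?thesis using None by (simp add: A_def pred_def)
  next
    case (Some i)
    have "Measurable.pred (PiM (K j) (Mp ?pp)) (\<lambda>g. reach N g a (w@[i]))"
      using Some by (intro reach_meas) (auto simp: K_def)
    then have "Measurable.pred (PiM (K j) (Mp ?pp)) (\<lambda>g. \<not> reach N g a (w@[i]))" by measurable
    then show ?thesis using Some by (simp add: A_def pred_def)
  qed
  have pre_None: "(\<lambda>\<omega>. restrict (\<lambda>i. \<omega> i) (K None)) -` A k None \<inter> space ?P = {\<omega> \<in> space ?P. fst (\<omega> (a,w)) = k}" for k
    by (auto simp: A_def K_def space_PiM PiE_iff)
  have pre_Some: "(\<lambda>\<omega>. restrict (\<lambda>i. \<omega> i) (K (Some i))) -` A k (Some i) \<inter> space ?P = space ?P - {\<omega> \<in> space ?P. reach N \<omega> a (w@[i])}" for k i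
  proof -
    have "reach N (restrict (\<lambda>i. \<omega> i) (K (Some i))) a (w@[i]) = reach N \<omega> a (w@[i])" for \<omega>
      by (rule reach_cong) (use Kin in auto)
    then show ?thesis by (auto simp: A_def space_PiM PiE_iff)
  qed
  have reach_sets: "{\<omega> \<in> space ?P. reach N' \<omega> a w'} \<in> sets ?P" for w' N'
  proof -
    have "Measurable.pred ?P (\<lambda>g. reach N' g a w')" by (intro reach_meas) auto
    then show ?thesis by (simp add: pred_def)
  qed
  have probB: "P.prob (B k) = pmf \<mu> k * y^k" for k
  proof -
    define J where "J = insert None (Some ` {..<k})"
    have "(\<Inter>j\<in>J. (\<lambda>\<omega>. restrict (\<lambda>i. \<omega> i) (K j)) -` A k j \<inter> space ?P) =
        ((\<lambda>\<omega>. restrict (\<lambda>i. \<omega> i) (K None)) -` A k None \<inter> space ?P) \<inter>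
        (\<Inter>i\<in>{..<k}. (\<lambda>\<omega>. restrict (\<lambda>i. \<omega> i) (K (Some i))) -` A k (Some i) \<inter> space ?P)"
      unfolding J_def by auto
    also have "\<dots> = {\<omega> \<in> space ?P. fst (\<omega> (a,w)) = k} \<inter> (\<Inter>i\<in>{..<k}. space ?P - {\<omega> \<in> space ?P. reach N \<omega> a (w@[i])})"
      by (simp only: pre_None pre_Some)
    also have "\<dots> = B k" unfolding B_def by auto
    finally have "B k = (\<Inter>j\<in>J. (\<lambda>\<omega>. restrict (\<lambda>i. \<omega> i) (K j)) -` A k j \<inter> space ?P)" by simp
    then have "P.prob (B k) = (\<Prod>j\<in>J. P.prob ((\<lambda>\<omega>. restrict (\<lambda>i. \<omega> i) (K j)) -` A k j \<inter> space ?P))"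
      using P.indep_varsD[OF ind, of J "A k"] Asets by (simp add: J_def)
    also have "\<dots> = P.prob {\<omega> \<in> space ?P. fst (\<omega> (a,w)) = k} * (\<Prod>i<k. P.prob (space ?P - {\<omega> \<in> space ?P. reach N \<omega> a (w@[i])}))"
      unfolding J_def by (simp add: pre_None pre_Some prod.reindex)
    also have "P.prob {\<omega> \<in> space ?P. fst (\<omega> (a,w)) = k} = pmf \<mu> k"
    proof -
      interpret pp: product_prob_space "Mp ?pp" UNIV by (rule pps2)
      have "P.prob {\<omega> \<in> space ?P. \<omega> (a,w) \<in> {x. fst x = k}} = measure (measure_pmf ?pp) {x. fst x = k}"
        using pp.emeasure_PiM_Collect_single[of "(a,w)" "{x. fst x = k}"]
        by (simp add: P.emeasure_eq_measure measure_pmf.emeasure_eq_measure)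
      also have "\<dots> = measure (map_pmf fst ?pp) {k}" by (simp add: vimage_def)
      also have "\<dots> = pmf \<mu> k" by (simp add: map_fst_pair_pmf measure_pmf_single)
      finally show ?thesis by simp
    qed
    also have "(\<Prod>i<k. P.prob (space ?P - {\<omega> \<in> space ?P. reach N \<omega> a (w@[i])})) = y^k"
      using P.prob_compl[OF reach_sets] Suc.IH by (simp add: y_def)
    finally show ?thesis .
  qed
  have Bsets: "range B \<subseteq> sets ?P"
  proof -
    have "B k = (space ?P - (\<Union>i<k. {\<omega> \<in> space ?P. reach N \<omega> a (w@[i])})) \<inter> {\<omega> \<in> space ?P. fst (\<omega> (a,w)) = k}" for k
      unfolding B_def by auto
    moreover have "{\<omega> \<in> space ?P. fst (\<omega> (a,w)) = k} \<in> sets ?P" for k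
    proof -
      have comp: "(\<lambda>f. f (a,w)) \<in> measurable ?P (measure_pmf ?pp)"
        by (intro measurable_component_singleton) simp
      have "Measurable.pred ?P (\<lambda>g. fst (g (a,w)) = k)"
        by (rule measurable_compose[OF comp]) simp
      then show ?thesis by (simp add: pred_def)
    qed
    ultimately show ?thesis using reach_sets by auto
  qed
  have Bdisj: "disjoint_family B" unfolding disjoint_family_on_def B_def by auto
  have Bun: "(\<Union>k. B k) = space ?P - {\<omega> \<in> space ?P. reach (Suc N) \<omega> a w}"
    unfolding B_def by (auto simp: reach_Suc)
  have "(\<lambda>k. P.prob (B k)) sums P.prob (\<Union>k. B k)"
    by (rule P.finite_measure_UNION[OF Bsets Bdisj])
  then have "(\<lambda>k. pmf \<mu> k * y^k) sums P.prob (space ?P - {\<omega> \<in> space ?P. reach (Suc N) \<omega> a w})"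
    using probB Bun by simp
  then have "gf y = P.prob (space ?P - {\<omega> \<in> space ?P. reach (Suc N) \<omega> a w})"
    by (intro gf_sums[OF mu_hyp_axioms y])
  also have "\<dots> = 1 - P.prob {\<omega> \<in> space ?P. reach (Suc N) \<omega> a w}"
    by (rule P.prob_compl) (simp add: reach_sets)
  finally show ?case by (simp add: y_def)
qed

end


lemma sN_lim: "mu_hyp \<mu> \<Longrightarrow> e > 0 \<Longrightarrow> \<exists>N. mu_hyp.sN \<mu> N < e"
  by (rule mu_hyp.iter_to_zero[where s="mu_hyp.sN \<mu>"]) (auto simp: mu_hyp.sN_range mu_hyp.sN.simps)

abbreviation P1 :: "nat pmf \<Rightarrow> 'b pmf \<Rightarrow> (nat \<Rightarrow> (nat \<times> nat) \<times> 'b) measure" where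
  "P1 \<mu> \<theta> \<equiv> PiM UNIV (\<lambda>_. measure_pmf (pair_pmf (spine_pmf \<mu>) \<theta>))"

lemma bt_space_eq: "bt_space \<mu> \<theta> = P1 \<mu> \<theta> \<Otimes>\<^sub>M P2 (pair_pmf \<mu> \<theta>)"
  unfolding bt_space_def ..

lemma ps1: "prob_space (P1 \<mu> \<theta>)"
  by (rule prob_space_PiM) (simp add: measure_pmf.prob_space_axioms)

lemma pps1: "product_prob_space (\<lambda>_::nat. measure_pmf (pair_pmf (spine_pmf \<mu>) \<theta>))"
  by (rule product_prob_spaceI) (simp add: measure_pmf.prob_space_axioms)

lemma ps_bt: "prob_space (bt_space \<mu> \<theta>)"
  unfolding bt_space_eq
proof -
  interpret A: prob_space "P1 \<mu> \<theta>" by (rule ps1)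
  interpret B: prob_space "P2 (pair_pmf \<mu> \<theta>)" by (rule ps2)
  interpret pair_prob_space "P1 \<mu> \<theta>" "P2 (pair_pmf \<mu> \<theta>)" ..
  show "prob_space (P1 \<mu> \<theta> \<Otimes>\<^sub>M P2 (pair_pmf \<mu> \<theta>))" by (rule prob_space_axioms)
qed

lemma meas_fst_coord[measurable]:
  "(\<lambda>\<omega>. fst \<omega> n) \<in> measurable (bt_space \<mu> \<theta>) (measure_pmf (pair_pmf (spine_pmf \<mu>) \<theta>))"
  unfolding bt_space_eq
  by (rule measurable_compose[OF measurable_fst]) (rule measurable_component_singleton, simp)

lemma meas_snd_coord[measurable]:
  "(\<lambda>\<omega>. snd \<omega> l) \<in> measurable (bt_space \<mu> \<theta>) (measure_pmf (pair_pmf \<mu> \<theta>))"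
  unfolding bt_space_eq
  by (rule measurable_compose[OF measurable_snd]) (rule measurable_component_singleton, simp)

lemma meas_Lc[measurable]: "(\<lambda>\<omega>. Lc \<omega> n) \<in> measurable (bt_space \<mu> \<theta>) (count_space UNIV)"
  unfolding Lc_def by (rule measurable_compose[OF meas_fst_coord]) simp

lemma meas_Dsp[measurable]: "(\<lambda>\<omega>. Dsp \<omega> n) \<in> measurable (bt_space \<mu> \<theta>) (count_space UNIV)"
  unfolding Dsp_def by (rule measurable_compose[OF meas_fst_coord]) simp

lemma meas_xi[measurable]: "(\<lambda>\<omega>. xi \<omega> n w) \<in> measurable (bt_space \<mu> \<theta>) (count_space UNIV)"
  unfolding xi_def by (rule measurable_compose[OF meas_snd_coord]) simp

lemma meas_Dtr[measurable]: "(\<lambda>\<omega>. Dtr \<omega> n w) \<in> measurable (bt_space \<mu> \<theta>) (count_space UNIV)"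
  unfolding Dtr_def by (rule measurable_compose[OF meas_snd_coord]) simp

lemma pred_in_sub[measurable]: "Measurable.pred (bt_space \<mu> \<theta>) (\<lambda>\<omega>. in_sub \<omega> n w)"
  unfolding in_sub_def by measurable

lemma finite_tree: fixes c :: "nat list \<Rightarrow> nat" shows "finite {w. length w \<le> N \<and> (\<forall>j<length w. w!j < c (take j w))}"
proof (induction N)
  case 0 then show ?case by simp
next
  case (Suc N)
  let ?S = "\<lambda>N. {w. length w \<le> N \<and> (\<forall>j<length w. w!j < c (take j w))}"
  have "?S (Suc N) \<subseteq> ?S N \<union> (\<lambda>(u,x). u@[x]) ` (SIGMA u:?S N. {..<c u})"
  proof
    fix w assume w: "w \<in> ?S (Suc N)"
    show "w \<in> ?S N \<union> (\<lambda>(u,x). u@[x]) ` (SIGMA u:?S N. {..<c u})"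
    proof (cases "length w \<le> N")
      case True then show ?thesis using w by auto
    next
      case False
      then have l: "length w = Suc N" using w by auto
      then obtain u x where ux: "w = u @ [x]" by (metis length_Suc_conv_rev)
      have lu: "length u = N" using l ux by simp
      have "u \<in> ?S N"
      proof -
        have "u!j < c (take j u)" if "j < length u" for j
        proof -
          have "w!j < c (take j w)" using w that ux by auto
          moreover have "w!j = u!j" "take j w = take j u" using that ux by (auto simp: nth_append)
          ultimately show ?thesis by simp
        qed
        then show ?thesis using lu by simp
      qed
      moreover have "x < c u"
      proof -
        have "w!N < c (take N w)" using w l by auto
        moreover have "w!N = x" "take N w = u" using ux lu by auto
        ultimately show ?thesis by simp
      qed
      ultimately show ?thesis using ux by auto
    qed
  qed
  moreover have "finite (?S N \<union> (\<lambda>(u,x). u@[x]) ` (SIGMA u:?S N. {..<c u}))"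
    using Suc.IH by (intro finite_UnI finite_imageI finite_SigmaI) auto
  ultimately show ?case by (rule finite_subset)
qed


lemma measure_pair_Times:
  assumes "prob_space A" "prob_space B" "X \<in> sets A" "Y \<in> sets B"
  shows "measure (A \<Otimes>\<^sub>M B) (X \<times> Y) = measure A X * measure B Y"
proof -
  interpret A: prob_space A by fact
  interpret B: prob_space B by fact
  have "emeasure (A \<Otimes>\<^sub>M B) (X \<times> Y) = emeasure A X * emeasure B Y"
    using assms by (intro B.emeasure_pair_measure_Times) auto
  then show ?thesis
    by (simp add: measure_def enn2real_mult)
qed

lemma bt_fst_event:
  assumes "Measurable.pred (P1 \<mu> \<theta>) Q"
  shows "measure (bt_space \<mu> \<theta>) {\<omega> \<in> space (bt_space \<mu> \<theta>). Q (fst \<omega>)} = measure (P1 \<mu> \<theta>) {x \<in> space (P1 \<mu> \<theta>). Q x}"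
proof -
  have "{\<omega> \<in> space (bt_space \<mu> \<theta>). Q (fst \<omega>)} = {x \<in> space (P1 \<mu> \<theta>). Q x} \<times> space (P2 (pair_pmf \<mu> \<theta>))"
    unfolding bt_space_eq by (auto simp: space_pair_measure)
  moreover have "measure (P1 \<mu> \<theta> \<Otimes>\<^sub>M P2 (pair_pmf \<mu> \<theta>)) ({x \<in> space (P1 \<mu> \<theta>). Q x} \<times> space (P2 (pair_pmf \<mu> \<theta>)))
     = measure (P1 \<mu> \<theta>) {x \<in> space (P1 \<mu> \<theta>). Q x}"
    using assms prob_space.prob_space[OF ps2] by (subst measure_pair_Times[OF ps1 ps2]) (auto simp: pred_def)
  ultimately show ?thesis unfolding bt_space_eq by simp
qed

lemma bt_snd_event:
  assumes "Measurable.pred (P2 (pair_pmf \<mu> \<theta>)) Q"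
  shows "measure (bt_space \<mu> \<theta>) {\<omega> \<in> space (bt_space \<mu> \<theta>). Q (snd \<omega>)} = measure (P2 (pair_pmf \<mu> \<theta>)) {x \<in> space (P2 (pair_pmf \<mu> \<theta>)). Q x}"
proof -
  have "{\<omega> \<in> space (bt_space \<mu> \<theta>). Q (snd \<omega>)} = space (P1 \<mu> \<theta>) \<times> {x \<in> space (P2 (pair_pmf \<mu> \<theta>)). Q x}"
    unfolding bt_space_eq by (auto simp: space_pair_measure)
  moreover have "measure (P1 \<mu> \<theta> \<Otimes>\<^sub>M P2 (pair_pmf \<mu> \<theta>)) (space (P1 \<mu> \<theta>) \<times> {x \<in> space (P2 (pair_pmf \<mu> \<theta>)). Q x})
     = measure (P2 (pair_pmf \<mu> \<theta>)) {x \<in> space (P2 (pair_pmf \<mu> \<theta>)). Q x}"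
    using assms prob_space.prob_space[OF ps1] by (subst measure_pair_Times[OF ps1 ps2]) (auto simp: pred_def)
  ultimately show ?thesis unfolding bt_space_eq by simp
qed

definition InfT :: "'d bt_omega \<Rightarrow> nat \<Rightarrow> bool" where
  "InfT \<omega> a \<longleftrightarrow> (\<forall>N. \<exists>w. N \<le> length w \<and> in_sub \<omega> a w)"

lemma pred_InfT[measurable]: "Measurable.pred (bt_space \<mu> \<theta>) (\<lambda>\<omega>. InfT \<omega> a)"
  unfolding InfT_def by measurable

lemma not_InfT_finite:
  assumes "\<not> InfT \<omega> a"
  shows "finite {w. in_sub \<omega> a w}"
proof -
  obtain N where N: "\<And>w. in_sub \<omega> a w \<Longrightarrow> length w < N"
    using assms unfolding InfT_def by (meson not_le)
  define c where "c u = (if u = [] then Lc \<omega> a else xi \<omega> a u)" for u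
  have "{w. in_sub \<omega> a w} \<subseteq> {w. length w \<le> N \<and> (\<forall>j<length w. w!j < c (take j w))}"
  proof safe
    fix w assume w: "in_sub \<omega> a w"
    show "length w \<le> N" using N[OF w] by simp
    fix j assume j: "j < length w"
    show "w!j < c (take j w)"
    proof (cases j)
      case 0 then show ?thesis using w unfolding in_sub_def c_def by (cases w) auto
    next
      case (Suc j') then show ?thesis using w j unfolding in_sub_def c_def by auto
    qed
  qed
  then show ?thesis using finite_tree finite_subset by blast
qed

lemma InfT_sub:
  assumes "InfT \<omega> a"
  shows "K < Lc \<omega> a \<or> (\<exists>i<K. reach N (snd \<omega>) a [i])"
proof -
  obtain w where w: "Suc N \<le> length w" "in_sub \<omega> a w" using assms unfolding InfT_def by blast
  obtain i u where iu: "w = i # u" using w by (cases w) auto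
  have i: "i < Lc \<omega> a" using w iu unfolding in_sub_def by simp
  have "reach N (snd \<omega>) a [i]"
    unfolding reach_def
  proof (intro exI[of _ "take N u"] conjI allI impI)
    show "length (take N u) = N" using w iu by simp
    fix j assume j: "j < N"
    have "\<forall>j. 1 \<le> j \<and> j < length w \<longrightarrow> w ! j < xi \<omega> a (take j w)"
      using w unfolding in_sub_def by blast
    then have "w!(Suc j) < xi \<omega> a (take (Suc j) w)"
      using w j iu by (metis Suc_le_mono le_add1 le_trans less_eq_Suc_le plus_1_eq_Suc)
    moreover have "w!(Suc j) = take N u ! j" using j iu by simp
    moreover have "take (Suc j) w = [i] @ take j (take N u)" using j iu by (simp add: min_def)
    ultimately show "take N u ! j < fst (snd \<omega> (a, [i] @ take j (take N u)))"
      by (simp add: xi_def)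
  qed
  moreover have "\<not> K < Lc \<omega> a \<Longrightarrow> i < K" using i by simp
  ultimately show ?thesis by blast
qed

lemma pred_reach_P2[measurable]: "Measurable.pred (P2 pp) (\<lambda>f. reach N f a w)"
  by (intro reach_meas) auto

lemma le_eps_zero: "(\<And>e. e > 0 \<Longrightarrow> (x::real) \<le> e) \<Longrightarrow> 0 \<le> x \<Longrightarrow> x = 0"
  by (metis dual_order.antisym field_lbound_gt_zero less_eq_real_def linorder_not_le)

lemma InfT_null:
  assumes mh: "mu_hyp \<mu>"
  shows "{\<omega> \<in> space (bt_space \<mu> \<theta>). InfT \<omega> a} \<in> null_sets (bt_space \<mu> \<theta>)"
proof -
  let ?O = "bt_space \<mu> \<theta>"
  interpret O: prob_space ?O by (rule ps_bt)
  let ?X = "{\<omega> \<in> space ?O. InfT \<omega> a}"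
  have Xs: "?X \<in> sets ?O" by measurable
  have "O.prob ?X \<le> e" if e: "e > 0" for e
  proof -
    define A where "A K = {\<omega> \<in> space ?O. K < Lc \<omega> a}" for K
    have As1: "A K \<in> sets ?O" for K unfolding A_def by measurable
    then have As: "range A \<subseteq> sets ?O" by auto
    have "decseq A" unfolding A_def decseq_def by auto
    moreover have "(\<Inter>K. A K) = {}" unfolding A_def by (auto dest: spec[of _ "Lc _ a"])
    ultimately have "(\<lambda>K. O.prob (A K)) \<longlonglongrightarrow> 0"
      using O.finite_Lim_measure_decseq[OF As] by simp
    then obtain K where K: "O.prob (A K) < e/2"
      using e by (metis (no_types, lifting) LIMSEQ_D diff_zero half_gt_zero le_refl norm_minus_cancel real_norm_def abs_less_iff)
    obtain N where N: "mu_hyp.sN \<mu> N < e / (2 * (real K + 1))"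
      using sN_lim[OF mh, of "e / (2 * (real K + 1))"] e by auto
    define R where "R i = {\<omega> \<in> space ?O. reach N (snd \<omega>) a [i]}" for i
    have Rs: "R i \<in> sets ?O" for i
    proof -
      have "(\<lambda>\<omega>. snd \<omega>) \<in> measurable ?O (P2 (pair_pmf \<mu> \<theta>))" unfolding bt_space_eq by simp
      then have "Measurable.pred ?O (\<lambda>\<omega>. reach N (snd \<omega>) a [i])" by measurable
      then show ?thesis unfolding R_def by (simp add: pred_def)
    qed
    have PR: "O.prob (R i) = mu_hyp.sN \<mu> N" for i
      unfolding R_def by (subst bt_snd_event) (auto simp: mu_hyp.reach_prob[OF mh])
    have "?X \<subseteq> A K \<union> (\<Union>i\<in>{..<K}. R i)"
      unfolding A_def R_def using InfT_sub[of _ a K N] by auto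
    then have "O.prob ?X \<le> O.prob (A K \<union> (\<Union>i\<in>{..<K}. R i))"
      using As Rs by (intro O.finite_measure_mono) auto
    also have "\<dots> \<le> O.prob (A K) + O.prob (\<Union>i\<in>{..<K}. R i)"
      using As Rs by (intro measure_Un_le) auto
    also have "O.prob (\<Union>i\<in>{..<K}. R i) \<le> (\<Sum>i<K. O.prob (R i))"
      using Rs by (intro O.finite_measure_subadditive_finite) auto
    also have "\<dots> = real K * mu_hyp.sN \<mu> N" by (simp add: PR)
    also have "\<dots> \<le> real K * (e / (2 * (real K + 1)))"
      using N by (intro mult_left_mono) auto
    also have "\<dots> \<le> e / 2"
      using e by (simp add: field_simps)
    finally show ?thesis using K by simp
  qed
  then have "O.prob ?X = 0" by (intro le_eps_zero) auto
  then show ?thesis using Xs by (intro null_setsI) (simp add: O.emeasure_eq_measure)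
qed


lemma rv_add: "rv (a + b) = rv a + rv b"
  by (simp add: rv_def vec_eq_iff)
lemma rv_diff: "rv (a - b) = rv a - rv b"
  by (simp add: rv_def vec_eq_iff)
lemma rv_zero: "rv 0 = 0"
  by (simp add: rv_def vec_eq_iff)
lemma rv_sum: "rv (sum f A) = (\<Sum>x\<in>A. rv (f x))"
  by (induction A rule: infinite_finite_induct) (auto simp: rv_add rv_zero)

fun idx :: "vtx \<Rightarrow> nat" where
  "idx (Sp n) = n" | "idx (Sb n w) = n"

definition preds :: "'d bt_omega \<Rightarrow> vtx \<Rightarrow> vtx set" where
  "preds \<omega> v = {u \<in> verts \<omega>. vless u v}"

lemma rank_preds: "rank \<omega> v = card (preds \<omega> v)"
  unfolding rank_def preds_def ..

lemma vless_idx: "vless u v \<Longrightarrow> idx u \<le> idx v"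
  by (cases u; cases v) auto

lemma verts_cases: "u \<in> verts \<omega> \<Longrightarrow> (\<exists>a. u = Sp a) \<or> (\<exists>a w. u = Sb a w \<and> in_sub \<omega> a w)"
  unfolding verts_def by auto

definition Good :: "'d bt_omega \<Rightarrow> bool" where
  "Good \<omega> \<longleftrightarrow> (\<forall>a. \<not> InfT \<omega> a)"

lemma upto_idx_finite:
  assumes "Good \<omega>"
  shows "finite {u \<in> verts \<omega>. idx u \<le> b}"
proof -
  have "{u \<in> verts \<omega>. idx u \<le> b} \<subseteq> Sp ` {..b} \<union> (\<Union>a\<in>{..b}. (\<lambda>w. Sb a w) ` {w. in_sub \<omega> a w})"
    by (auto dest!: verts_cases)
  moreover have "finite (Sp ` {..b} \<union> (\<Union>a\<in>{..b}. (\<lambda>w. Sb a w) ` {w. in_sub \<omega> a w}))"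
  proof -
    have "finite {w. in_sub \<omega> a w}" for a using assms not_InfT_finite unfolding Good_def by blast
    then show ?thesis by auto
  qed
  ultimately show ?thesis by (rule finite_subset)
qed

lemma preds_finite:
  assumes "Good \<omega>"
  shows "finite (preds \<omega> v)"
proof -
  have "preds \<omega> v \<subseteq> {u \<in> verts \<omega>. idx u \<le> idx v}"
    unfolding preds_def using vless_idx by auto
  then show ?thesis using upto_idx_finite[OF assms] by (rule finite_subset)
qed

lemma Sp_verts[simp]: "Sp n \<in> verts \<omega>"
  unfolding verts_def by auto

lemma rank_ge_idx:
  assumes "Good \<omega>"
  shows "idx v \<le> rank \<omega> v"
proof -
  have "Sp ` {..<idx v} \<subseteq> preds \<omega> v"
    unfolding preds_def by (cases v) auto
  then have "card (Sp ` {..<idx v}) \<le> card (preds \<omega> v)"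
    using preds_finite[OF assms] card_mono by blast
  moreover have "card (Sp ` {..<idx v}) = idx v" by (simp add: card_image inj_on_def)
  ultimately show ?thesis by (simp add: rank_preds)
qed

lemma rank_Sp0: "rank \<omega> (Sp 0) = 0"
proof -
  have "{u \<in> verts \<omega>. vless u (Sp 0)} = {}" by (auto dest!: verts_cases)
  then show ?thesis unfolding rank_def by (metis card.empty)
qed

lemma rank_Sb_less:
  assumes "Good \<omega>" "k < n" "in_sub \<omega> k w"
  shows "rank \<omega> (Sb k w) < rank \<omega> (Sp n)"
proof -
  have sub: "insert (Sb k w) (preds \<omega> (Sb k w)) \<subseteq> preds \<omega> (Sp n)"
    unfolding preds_def using assms(2,3) by (auto simp: verts_def dest!: vless_idx)
  have notin: "Sb k w \<notin> preds \<omega> (Sb k w)"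
    unfolding preds_def by (auto simp: lexord_irreflexive)
  have "card (insert (Sb k w) (preds \<omega> (Sb k w))) \<le> card (preds \<omega> (Sp n))"
    using preds_finite[OF assms(1)] sub by (intro card_mono) auto
  then show ?thesis using notin preds_finite[OF assms(1)] by (simp add: rank_preds)
qed

lemma visited_finite:
  assumes "Good \<omega>"
  shows "finite {v \<in> verts \<omega>. rank \<omega> v \<le> m}"
proof -
  have "{v \<in> verts \<omega>. rank \<omega> v \<le> m} \<subseteq> {u \<in> verts \<omega>. idx u \<le> m}"
    using rank_ge_idx[OF assms] le_trans by blast
  then show ?thesis using upto_idx_finite[OF assms] by (rule finite_subset)
qed

definition Bad :: "nat \<Rightarrow> real \<Rightarrow> nat \<Rightarrow> 'd::finite bt_omega \<Rightarrow> bool" where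
  "Bad L s n \<omega> \<longleftrightarrow> (L < n \<and> (\<forall>k. n - L \<le> k \<and> k < n \<longrightarrow> Lc \<omega> k = 0))
     \<or> (\<exists>j. 1 \<le> j \<and> j \<le> n \<and> n \<le> j + L \<and> s \<le> norm (rv (Dsp \<omega> j)))
     \<or> (\<exists>k. 1 \<le> k \<and> k < n \<and> n \<le> k + L \<and> s \<le> norm (rv (Dtr \<omega> k [0])))"

lemma sum_norm_bound:
  assumes "finite A" "\<And>j. j \<in> A \<Longrightarrow> norm (rv (Dsp \<omega> j)) < s"
  shows "norm (rv (\<Sum>j\<in>A. Dsp \<omega> j)) \<le> real (card A) * s"
proof -
  have "norm (rv (\<Sum>j\<in>A. Dsp \<omega> j)) = norm (\<Sum>j\<in>A. rv (Dsp \<omega> j))" by (simp add: rv_sum)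
  also have "\<dots> \<le> (\<Sum>j\<in>A. norm (rv (Dsp \<omega> j)))" by (rule norm_sum)
  also have "\<dots> \<le> (\<Sum>j\<in>A. s)" using assms(2) by (intro sum_mono) (simp add: less_imp_le)
  also have "\<dots> = real (card A) * s" by simp
  finally show ?thesis .
qed

lemma dist_rv: "dist (rv a) (rv b) = norm (rv (a - b))"
  by (simp add: dist_norm rv_diff)

lemma spine_close:
  fixes \<omega> :: "'d::finite bt_omega"
  assumes G: "Good \<omega>" and n: "1 \<le> n" and nb: "\<not> Bad L s n \<omega>" and s: "s > 0"
  shows "\<exists>y. y \<in> Yset \<omega> \<and> rank \<omega> y \<le> rank \<omega> (Sp n) \<and>
           dist (rv (pos 0 \<omega> (Sp n))) (rv (pos 0 \<omega> y)) < (real L + 1) * s"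
proof -
  let ?P = "\<lambda>k. k < n \<and> (k = 0 \<or> 0 < Lc \<omega> k)"
  define k where "k = (GREATEST k. ?P k)"
  have P0: "?P 0" using n by simp
  have bnd: "\<And>y. ?P y \<Longrightarrow> y \<le> n" by auto
  have Pk: "?P k" unfolding k_def by (rule GreatestI_nat[where P="?P", OF P0 bnd])
  have maxk: "k' \<le> k" if "?P k'" for k' unfolding k_def by (rule Greatest_le_nat[where P="?P", OF that bnd])
  have nL: "n \<le> k + L"
  proof (rule ccontr)
    assume "\<not> n \<le> k + L"
    then have nl: "k + L < n" by simp
    have "Lc \<omega> k' = 0" if "n - L \<le> k'" "k' < n" for k'
    proof (rule ccontr)
      assume "Lc \<omega> k' \<noteq> 0"
      then have "k' \<le> k" using maxk[of k'] that by auto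
      then show False using that nl by linarith
    qed
    then have "L < n \<and> (\<forall>k'. n - L \<le> k' \<and> k' < n \<longrightarrow> Lc \<omega> k' = 0)"
      using nl by auto
    then show False using nb unfolding Bad_def by blast
  qed
  have jb: "norm (rv (Dsp \<omega> j)) < s" if "1 \<le> j" "j \<le> n" "n \<le> j + L" for j
    using nb that unfolding Bad_def by (meson not_le)
  show ?thesis
  proof (cases "k = 0")
    case True
    have y: "Sp 0 \<in> Yset \<omega>" unfolding Yset_def by auto
    have "dist (rv (pos 0 \<omega> (Sp n))) (rv (pos 0 \<omega> (Sp 0))) = norm (rv (\<Sum>j\<in>{1..n}. Dsp \<omega> j))"
      by (simp add: dist_rv)
    also have "\<dots> \<le> real (card {1..n}) * s"
      using nL True by (intro sum_norm_bound jb) auto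
    also have "\<dots> \<le> real L * s" using nL True s by (intro mult_right_mono) auto
    also have "\<dots> < (real L + 1) * s" using s by (simp add: algebra_simps)
    finally show ?thesis using y rank_Sp0[of \<omega>] by auto
  next
    case False
    then have k1: "1 \<le> k" "k < n" "0 < Lc \<omega> k" using Pk by auto
    have ins: "in_sub \<omega> k [0]" unfolding in_sub_def using k1 by auto
    have y: "Sb k [0] \<in> Yset \<omega>" unfolding Yset_def verts_def using ins by auto
    have rk: "rank \<omega> (Sb k [0]) \<le> rank \<omega> (Sp n)" using rank_Sb_less[OF G k1(2) ins] by simp
    have split: "(\<Sum>j\<in>{1..n}. Dsp \<omega> j) = (\<Sum>j\<in>{1..k}. Dsp \<omega> j) + (\<Sum>j\<in>{Suc k..n}. Dsp \<omega> j)"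
    proof -
      have "{1..n} = {1..k} \<union> {Suc k..n}" using k1 by auto
      then show ?thesis by (simp add: sum.union_disjoint)
    qed
    have "pos 0 \<omega> (Sp n) - pos 0 \<omega> (Sb k [0]) = (\<Sum>j\<in>{Suc k..n}. Dsp \<omega> j) - Dtr \<omega> k [0]"
      using split by (simp add: algebra_simps)
    then have "dist (rv (pos 0 \<omega> (Sp n))) (rv (pos 0 \<omega> (Sb k [0]))) = norm (rv (\<Sum>j\<in>{Suc k..n}. Dsp \<omega> j) - rv (Dtr \<omega> k [0]))"
      by (simp only: dist_rv rv_diff)
    also have "\<dots> \<le> norm (rv (\<Sum>j\<in>{Suc k..n}. Dsp \<omega> j)) + norm (rv (Dtr \<omega> k [0]))"
      by (rule norm_triangle_ineq4)
    also have "\<dots> < real (card {Suc k..n}) * s + s"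
    proof (rule add_le_less_mono)
      show "norm (rv (\<Sum>j\<in>{Suc k..n}. Dsp \<omega> j)) \<le> real (card {Suc k..n}) * s"
        using nL k1 by (intro sum_norm_bound jb) auto
      show "norm (rv (Dtr \<omega> k [0])) < s"
        using nb k1 nL unfolding Bad_def by (meson not_le)
    qed
    also have "\<dots> \<le> (real L + 1) * s"
    proof -
      have "real (card {Suc k..n}) * s \<le> real L * s" using nL s by (intro mult_right_mono) auto
      then show ?thesis by (simp add: algebra_simps)
    qed
    finally show ?thesis using y rk by auto
  qed
qed

lemma det_bound:
  fixes \<omega> :: "'d::finite bt_omega"
  assumes G: "Good \<omega>" and s: "s > 0" and nb: "\<forall>n. 1 \<le> n \<and> n \<le> m \<longrightarrow> \<not> Bad L s n \<omega>"
  shows "Max ((\<lambda>z. infdist (rv z) (rv ` RY 0 \<omega> m)) ` RX 0 \<omega> m) < (real L + 1) * s"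
proof -
  have fin: "finite (RX 0 \<omega> m)"
    unfolding RX_def visited_def using visited_finite[OF G] by auto
  have p0: "pos 0 \<omega> (Sp 0) = 0" by simp
  have "0 \<in> RX 0 \<omega> m"
    unfolding RX_def visited_def using rank_Sp0[of \<omega>] p0 by (auto intro!: image_eqI[of _ _ "Sp 0"])
  then have ne: "RX 0 \<omega> m \<noteq> {}" by auto
  have each: "infdist (rv z) (rv ` RY 0 \<omega> m) < (real L + 1) * s" if z: "z \<in> RX 0 \<omega> m" for z
  proof -
    obtain v where v: "v \<in> verts \<omega>" "rank \<omega> v \<le> m" "z = pos 0 \<omega> v"
      using z unfolding RX_def visited_def by auto
    have tpos: "0 < (real L + 1) * s" using s by simp
    show ?thesis
    proof (cases "v \<in> Yset \<omega>")
      case True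
      then have "z \<in> RY 0 \<omega> m" unfolding RY_def visited_def using v by auto
      then have "infdist (rv z) (rv ` RY 0 \<omega> m) = 0" by (intro infdist_zero) auto
      then show ?thesis using tpos by simp
    next
      case False
      then obtain n where n: "v = Sp n" "1 \<le> n" using v(1) unfolding Yset_def by auto
      have "n \<le> m" using rank_ge_idx[OF G, of v] v n by simp
      then have "\<not> Bad L s n \<omega>" using nb n by auto
      from spine_close[OF G n(2) this s] obtain y where y: "y \<in> Yset \<omega>" "rank \<omega> y \<le> rank \<omega> (Sp n)"
        "dist (rv (pos 0 \<omega> (Sp n))) (rv (pos 0 \<omega> y)) < (real L + 1) * s" by blast
      have "pos 0 \<omega> y \<in> RY 0 \<omega> m"
        unfolding RY_def visited_def using y v n by (auto simp: Yset_def)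
      then have "infdist (rv z) (rv ` RY 0 \<omega> m) \<le> dist (rv z) (rv (pos 0 \<omega> y))"
        by (intro infdist_le) auto
      then show ?thesis using y v n by simp
    qed
  qed
  show ?thesis using fin ne each by (subst Max_less_iff) auto
qed


lemma P1_cyl:
  assumes "finite J"
  shows "measure (bt_space \<mu> \<theta>) {\<omega> \<in> space (bt_space \<mu> \<theta>). \<forall>k\<in>J. Q (fst \<omega> k)}
       = measure (measure_pmf (pair_pmf (spine_pmf \<mu>) \<theta>)) {x. Q x} ^ card J"
proof -
  interpret pp: product_prob_space "\<lambda>_::nat. measure_pmf (pair_pmf (spine_pmf \<mu>) \<theta>)" UNIV by (rule pps1)
  have m: "Measurable.pred (P1 \<mu> \<theta>) (\<lambda>x. \<forall>k\<in>J. Q (x k))"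
  proof -
    have "Measurable.pred (P1 \<mu> \<theta>) (\<lambda>x. Q (x k))" for k
      by (rule measurable_compose[OF measurable_component_singleton]) auto
    then show ?thesis using assms by (intro pred_intros_finite) auto
  qed
  have "measure (bt_space \<mu> \<theta>) {\<omega> \<in> space (bt_space \<mu> \<theta>). \<forall>k\<in>J. Q (fst \<omega> k)}
      = measure (P1 \<mu> \<theta>) {x \<in> space (P1 \<mu> \<theta>). \<forall>k\<in>J. x k \<in> {x. Q x}}"
    using bt_fst_event[OF m] by simp
  also have "\<dots> = (\<Prod>k\<in>J. measure (measure_pmf (pair_pmf (spine_pmf \<mu>) \<theta>)) {x. Q x})"
  proof -
    have "ennreal (measure (P1 \<mu> \<theta>) {x \<in> space (P1 \<mu> \<theta>). \<forall>k\<in>J. x k \<in> {x. Q x}}) =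
       ennreal (\<Prod>k\<in>J. measure (measure_pmf (pair_pmf (spine_pmf \<mu>) \<theta>)) {x. Q x})"
      using pp.emeasure_PiM_Collect[of J "\<lambda>_. {x. Q x}"] assms
      by (simp add: pp.emeasure_eq_measure measure_pmf.emeasure_eq_measure prod_ennreal ennreal_power)
    then show ?thesis by (subst (asm) ennreal_inj) (auto intro: prod_nonneg)
  qed
  finally show ?thesis by simp
qed

lemma P1_coord:
  "measure (bt_space \<mu> \<theta>) {\<omega> \<in> space (bt_space \<mu> \<theta>). Q (fst \<omega> j)}
       = measure (measure_pmf (pair_pmf (spine_pmf \<mu>) \<theta>)) {x. Q x}"
  using P1_cyl[of "{j}" \<mu> \<theta> Q] by simp

lemma P2_coord:
  "measure (bt_space \<mu> \<theta>) {\<omega> \<in> space (bt_space \<mu> \<theta>). Q (snd \<omega> l)}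
       = measure (measure_pmf (pair_pmf \<mu> \<theta>)) {x. Q x}"
proof -
  interpret pp: product_prob_space "Mp (pair_pmf \<mu> \<theta>)" UNIV by (rule pps2)
  have m: "Measurable.pred (P2 (pair_pmf \<mu> \<theta>)) (\<lambda>x. Q (x l))"
    by (rule measurable_compose[OF measurable_component_singleton]) auto
  have "measure (bt_space \<mu> \<theta>) {\<omega> \<in> space (bt_space \<mu> \<theta>). Q (snd \<omega> l)}
      = measure (P2 (pair_pmf \<mu> \<theta>)) {x \<in> space (P2 (pair_pmf \<mu> \<theta>)). x l \<in> {x. Q x}}"
    using bt_snd_event[OF m] by simp
  also have "\<dots> = measure (measure_pmf (pair_pmf \<mu> \<theta>)) {x. Q x}"
    using pp.emeasure_PiM_Collect_single[of l "{x. Q x}"]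
    by (simp add: pp.emeasure_eq_measure measure_pmf.emeasure_eq_measure)
  finally show ?thesis .
qed

lemma tail_Dsp:
  "measure (bt_space \<mu> \<theta>) {\<omega> \<in> space (bt_space \<mu> \<theta>). s \<le> norm (rv (Dsp \<omega> j))}
     = measure (measure_pmf \<theta>) {y. s \<le> norm (rv y)}"
proof -
  have "measure (bt_space \<mu> \<theta>) {\<omega> \<in> space (bt_space \<mu> \<theta>). s \<le> norm (rv (Dsp \<omega> j))}
     = measure (measure_pmf (pair_pmf (spine_pmf \<mu>) \<theta>)) {x. s \<le> norm (rv (snd x))}"
    unfolding Dsp_def by (rule P1_coord)
  also have "\<dots> = measure (map_pmf snd (pair_pmf (spine_pmf \<mu>) \<theta>)) {y. s \<le> norm (rv y)}"
    by (simp add: vimage_def)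
  also have "\<dots> = measure (measure_pmf \<theta>) {y. s \<le> norm (rv y)}" by (simp add: map_snd_pair_pmf)
  finally show ?thesis .
qed

lemma tail_Dtr:
  "measure (bt_space \<mu> \<theta>) {\<omega> \<in> space (bt_space \<mu> \<theta>). s \<le> norm (rv (Dtr \<omega> k w))}
     = measure (measure_pmf \<theta>) {y. s \<le> norm (rv y)}"
proof -
  have "measure (bt_space \<mu> \<theta>) {\<omega> \<in> space (bt_space \<mu> \<theta>). s \<le> norm (rv (Dtr \<omega> k w))}
     = measure (measure_pmf (pair_pmf \<mu> \<theta>)) {x. s \<le> norm (rv (snd x))}"
    unfolding Dtr_def by (rule P2_coord)
  also have "\<dots> = measure (map_pmf snd (pair_pmf \<mu> \<theta>)) {y. s \<le> norm (rv y)}"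
    by (simp add: vimage_def)
  also have "\<dots> = measure (measure_pmf \<theta>) {y. s \<le> norm (rv y)}" by (simp add: map_snd_pair_pmf)
  finally show ?thesis .
qed

lemma p_zero_bound:
  assumes mean: "measure_pmf.expectation \<mu> real = 1" and K: "K \<ge> 2"
  shows "measure (measure_pmf (pair_pmf (spine_pmf \<mu>) \<theta>)) {x. fst (fst x) = 0} \<le> 1 - pmf \<mu> K"
proof -
  have "measure (measure_pmf (pair_pmf (spine_pmf \<mu>) \<theta>)) {x. fst (fst x) = 0}
      = measure (map_pmf fst (pair_pmf (spine_pmf \<mu>) \<theta>)) {y. fst y = 0}"
    by (simp add: vimage_def)
  also have "\<dots> = measure (spine_pmf \<mu>) {y. fst y = 0}" by (simp add: map_fst_pair_pmf)
  finally have e: "measure (measure_pmf (pair_pmf (spine_pmf \<mu>) \<theta>)) {x. fst (fst x) = 0} = measure (spine_pmf \<mu>) {y. fst y = 0}" .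
  have d: "{y. fst y = 0} \<inter> {(K - 1, 0)} = {}" using K by auto
  have "measure (spine_pmf \<mu>) ({y. fst y = 0} \<union> {(K - 1, 0)}) = measure (spine_pmf \<mu>) {y. fst y = 0} + measure (spine_pmf \<mu>) {(K - 1, 0)}"
    using d by (intro measure_pmf.finite_measure_Union) auto
  moreover have "measure (spine_pmf \<mu>) ({y. fst y = 0} \<union> {(K - 1, 0)}) \<le> 1" by (rule measure_pmf.prob_le_1)
  moreover have "measure (spine_pmf \<mu>) {(K - 1, 0)} = pmf \<mu> K"
    using K by (simp add: measure_pmf_single pmf_spine[OF mean])
  ultimately show ?thesis using e by simp
qed

lemma bad_bound:
  fixes \<theta> :: "(int ^ 'd::finite) pmf"
  assumes mean: "measure_pmf.expectation \<mu> real = 1" and K: "K \<ge> 2"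
    and tl: "measure (measure_pmf \<theta>) {y. s \<le> norm (rv y)} \<le> B"
  shows "measure (bt_space \<mu> \<theta>) {\<omega> \<in> space (bt_space \<mu> \<theta>). Bad L s n \<omega>}
           \<le> (1 - pmf \<mu> K)^L + (2 * real L + 1) * B"
proof -
  let ?O = "bt_space \<mu> \<theta>"
  interpret O: prob_space ?O by (rule ps_bt)
  define Z where "Z = {\<omega> \<in> space ?O. L < n \<and> (\<forall>k. n - L \<le> k \<and> k < n \<longrightarrow> Lc \<omega> k = 0)}"
  define D where "D j = {\<omega> \<in> space ?O. s \<le> norm (rv (Dsp \<omega> j))}" for j
  define T where "T k = {\<omega> \<in> space ?O. s \<le> norm (rv (Dtr \<omega> k [0]))}" for k
  have Zs: "Z \<in> sets ?O" unfolding Z_def by measurable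
  have Ds: "D j \<in> sets ?O" for j unfolding D_def by measurable
  have Ts: "T k \<in> sets ?O" for k unfolding T_def by measurable
  have B0: "0 \<le> B" using tl measure_nonneg order_trans by blast
  have sub: "{\<omega> \<in> space ?O. Bad L s n \<omega>} \<subseteq> Z \<union> (\<Union>j\<in>{n-L..n}. D j) \<union> (\<Union>k\<in>{n-L..<n}. T k)"
    unfolding Bad_def Z_def D_def T_def by auto
  have "O.prob {\<omega> \<in> space ?O. Bad L s n \<omega>} \<le> O.prob (Z \<union> (\<Union>j\<in>{n-L..n}. D j) \<union> (\<Union>k\<in>{n-L..<n}. T k))"
    using Zs Ds Ts by (intro O.finite_measure_mono[OF sub]) auto
  also have "\<dots> \<le> O.prob (Z \<union> (\<Union>j\<in>{n-L..n}. D j)) + O.prob (\<Union>k\<in>{n-L..<n}. T k)"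
    using Zs Ds Ts by (intro measure_Un_le) auto
  also have "\<dots> \<le> O.prob Z + O.prob (\<Union>j\<in>{n-L..n}. D j) + O.prob (\<Union>k\<in>{n-L..<n}. T k)"
    using Zs Ds Ts measure_Un_le[of Z ?O "\<Union>j\<in>{n-L..n}. D j"] by auto
  also have "O.prob Z \<le> (1 - pmf \<mu> K)^L"
  proof (cases "L < n")
    case True
    have card: "card {n-L..<n} = L" using True by simp
    have "Z = {\<omega> \<in> space ?O. \<forall>k\<in>{n-L..<n}. fst (fst (fst \<omega> k)) = 0}"
      unfolding Z_def Lc_def using True by auto
    then have "O.prob Z = measure (measure_pmf (pair_pmf (spine_pmf \<mu>) \<theta>)) {x. fst (fst x) = 0} ^ L"
      using P1_cyl[of "{n-L..<n}" \<mu> \<theta> "\<lambda>x. fst (fst x) = 0"] card by simp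
    also have "\<dots> \<le> (1 - pmf \<mu> K)^L"
      by (intro power_mono p_zero_bound[OF mean K] measure_nonneg)
    finally show ?thesis .
  next
    case False
    then have "Z = {}" unfolding Z_def by auto
    moreover have "0 \<le> (1 - pmf \<mu> K)^L" using pmf_le_1[of \<mu> K] by simp
    ultimately show ?thesis by simp
  qed
  also have "O.prob (\<Union>j\<in>{n-L..n}. D j) \<le> real (L + 1) * B"
  proof -
    have "O.prob (\<Union>j\<in>{n-L..n}. D j) \<le> (\<Sum>j\<in>{n-L..n}. O.prob (D j))"
      using Ds by (intro O.finite_measure_subadditive_finite) auto
    also have "\<dots> \<le> (\<Sum>j\<in>{n-L..n}. B)"
      using tl by (intro sum_mono) (simp add: D_def tail_Dsp)
    also have "\<dots> = real (card {n-L..n}) * B" by simp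
    also have "\<dots> \<le> real (L + 1) * B" using B0 by (intro mult_right_mono) auto
    finally show ?thesis .
  qed
  also have "O.prob (\<Union>k\<in>{n-L..<n}. T k) \<le> real L * B"
  proof -
    have "O.prob (\<Union>k\<in>{n-L..<n}. T k) \<le> (\<Sum>k\<in>{n-L..<n}. O.prob (T k))"
      using Ts by (intro O.finite_measure_subadditive_finite) auto
    also have "\<dots> \<le> (\<Sum>k\<in>{n-L..<n}. B)"
      using tl by (intro sum_mono) (simp add: T_def tail_Dtr)
    also have "\<dots> = real (card {n-L..<n}) * B" by simp
    also have "\<dots> \<le> real L * B" using B0 by (intro mult_right_mono) auto
    finally show ?thesis .
  qed
  finally show ?thesis by (simp add: algebra_simps)
qed


lemma measure_le_superset:
  assumes "finite_measure M" "A \<subseteq> S" "S \<in> sets M"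
  shows "measure M A \<le> measure M S"
proof (cases "A \<in> sets M")
  case True
  then show ?thesis using assms finite_measure.finite_measure_mono by blast
next
  case False
  then show ?thesis by (simp add: measure_notin_sets measure_nonneg)
qed

lemma prob_bound:
  fixes \<theta> :: "(int ^ 'd::finite) pmf"
  assumes mh: "mu_hyp \<mu>" and K: "K \<ge> 2"
    and tl: "measure (measure_pmf \<theta>) {y. t / (real L + 1) \<le> norm (rv y)} \<le> B"
    and t: "t > 0"
  shows "measure (bt_space \<mu> \<theta>)
       {\<omega> \<in> space (bt_space \<mu> \<theta>).
          Max ((\<lambda>z. infdist (rv z) (rv ` RY 0 \<omega> m)) ` RX 0 \<omega> m) \<ge> t}
      \<le> real m * ((1 - pmf \<mu> K)^L + (2 * real L + 1) * B)"
proof -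
  let ?O = "bt_space \<mu> \<theta>"
  interpret O: prob_space ?O by (rule ps_bt)
  have mean: "measure_pmf.expectation \<mu> real = 1" using mh by (simp add: mu_hyp_def)
  define s where "s = t / (real L + 1)"
  have s: "s > 0" using t by (simp add: s_def)
  have ts: "(real L + 1) * s = t" by (simp add: s_def)
  define N where "N = {\<omega> \<in> space ?O. \<exists>a. InfT \<omega> a}"
  have Nnull: "N \<in> null_sets ?O"
  proof -
    have "N = (\<Union>a. {\<omega> \<in> space ?O. InfT \<omega> a})" unfolding N_def by auto
    then show ?thesis using InfT_null[OF mh] by auto
  qed
  define Bd where "Bd n = {\<omega> \<in> space ?O. Bad L s n \<omega>}" for n
  have Bds: "Bd n \<in> sets ?O" for n
  proof -
    have "Measurable.pred ?O (\<lambda>\<omega>. Bad L s n \<omega>)" unfolding Bad_def by measurable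
    then show ?thesis unfolding Bd_def by (simp add: pred_def)
  qed
  have sub: "{\<omega> \<in> space ?O. Max ((\<lambda>z. infdist (rv z) (rv ` RY 0 \<omega> m)) ` RX 0 \<omega> m) \<ge> t}
      \<subseteq> N \<union> (\<Union>n\<in>{1..m}. Bd n)"
  proof safe
    fix \<omega> assume om: "\<omega> \<in> space ?O" and ge: "t \<le> Max ((\<lambda>z. infdist (rv z) (rv ` RY 0 \<omega> m)) ` RX 0 \<omega> m)"
      and nB: "\<omega> \<notin> (\<Union>n\<in>{1..m}. Bd n)"
    show "\<omega> \<in> N"
    proof (rule ccontr)
      assume "\<omega> \<notin> N"
      then have G: "Good \<omega>" unfolding N_def Good_def using om by auto
      have "\<forall>n. 1 \<le> n \<and> n \<le> m \<longrightarrow> \<not> Bad L s n \<omega>" using nB om unfolding Bd_def by auto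
      from det_bound[OF G s this] ge ts show False by simp
    qed
  qed
  have "O.prob {\<omega> \<in> space ?O. Max ((\<lambda>z. infdist (rv z) (rv ` RY 0 \<omega> m)) ` RX 0 \<omega> m) \<ge> t}
      \<le> O.prob (N \<union> (\<Union>n\<in>{1..m}. Bd n))"
    using Nnull Bds by (intro measure_le_superset[OF O.finite_measure_axioms sub]) auto
  also have "\<dots> = O.prob (\<Union>n\<in>{1..m}. Bd n)"
    using Nnull Bds by (subst Un_commute, intro measure_Un_null_set) auto
  also have "\<dots> \<le> (\<Sum>n\<in>{1..m}. O.prob (Bd n))"
    using Bds by (intro O.finite_measure_subadditive_finite) auto
  also have "\<dots> \<le> (\<Sum>n\<in>{1..m}. (1 - pmf \<mu> K)^L + (2 * real L + 1) * B)"
    unfolding Bd_def using tl by (intro sum_mono bad_bound[OF mean K]) (simp add: s_def)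
  also have "\<dots> = real m * ((1 - pmf \<mu> K)^L + (2 * real L + 1) * B)" by simp
  finally show ?thesis .
qed


lemma final_arith:
  fixes m t \<eta> P c q q' p1 A \<delta> Kc :: real and L :: nat
  assumes m1: "1 \<le> m" and lm: "1 \<le> ln m" and eta: "0 < \<eta>" "\<eta> < 1" and tdef: "t = \<eta> * m powr (1/4)"
    and P0: "P \<le> 1" and Pb: "P \<le> m * (p1^L + (2 * real L + 1) * (c * (t / (real L + 1)) powr (- q)))"
    and c0: "0 \<le> c" and q': "4 < q'" "q' < q" and p1: "0 < p1" "p1 < 1"
    and L1: "A * ln m \<le> real L" and L2: "real L \<le> A * ln m + 1"
    and Adef: "A = (q'/4) / (- ln p1)" and \<delta>def: "\<delta> = (q - q') / q'"
    and Kcdef: "Kc = (2*A+3) * (A+2) powr q"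
    and ev: "ln m powr (q+1) * m powr (-\<delta>) \<le> 1 / Kc"
  shows "P \<le> (c + 2) * \<eta> powr (- q') * m powr (1 - q' / 4) * ln m powr (q' / 2)"
proof -
  have m0: "0 < m" using m1 by simp
  have t0: "0 < t" using tdef eta m0 by simp
  have lp: "ln p1 < 0" using p1 by simp
  have A0: "0 < A" unfolding Adef using lp q' by (intro divide_pos_pos) auto
  define W where "W = m * t powr (- q') * ln m powr (q'/2)"
  have lmq: "1 \<le> ln m powr (q'/2)" by (rule ge_one_powr_ge_zero) (use lm q' in auto)
  have tq: "t powr (- q') = \<eta> powr (- q') * m powr (- q'/4)"
    unfolding tdef by (simp add: powr_mult powr_powr eta m0 less_imp_le)
  have R: "(c + 2) * \<eta> powr (- q') * m powr (1 - q' / 4) * ln m powr (q' / 2) = (c + 2) * W"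
  proof -
    have "m powr (1 + (- q'/4)) = m powr 1 * m powr (- q'/4)" by (rule powr_add)
    then have "m powr (1 - q'/4) = m * m powr (- q'/4)" using m0 by simp
    then show ?thesis unfolding W_def tq by (simp add: algebra_simps)
  qed
  have W0: "0 < W" unfolding W_def using m0 t0 lmq by (intro mult_pos_pos) auto
  show ?thesis
  proof (cases "t powr q' \<le> m * ln m powr (q'/2)")
    case True
    have "1 \<le> W"
    proof -
      have "t powr q' * t powr (- q') = 1" using t0 by (simp add: powr_minus)
      then have "1 \<le> m * ln m powr (q'/2) * t powr (- q')"
        using True mult_right_mono[OF True, of "t powr (- q')"] by simp
      then show ?thesis unfolding W_def by (simp add: algebra_simps)
    qed
    moreover have "1 * W \<le> (c + 2) * W" using c0 W0 by (intro mult_right_mono) auto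
    ultimately have "1 \<le> (c + 2) * W" by linarith
    then show ?thesis using P0 R by linarith
  next
    case False
    moreover have "m * 1 \<le> m * ln m powr (q'/2)" using lmq m0 by (intro mult_left_mono) auto
    ultimately have tbig: "m < t powr q'" by simp
    have T1: "m * p1^L \<le> W"
    proof -
      have "p1^L = exp (real L * ln p1)" using p1 by (simp add: exp_of_nat_mult)
      also have "\<dots> \<le> exp (A * ln m * ln p1)"
        using L1 p1 by (simp add: ln_less_zero mult_right_mono_neg)
      also have "A * ln m * ln p1 = - (q'/4) * ln m"
      proof -
        have "A * ln p1 = - (q'/4)" using Adef lp by (simp add: field_simps)
        then show ?thesis by (metis mult.commute mult.left_commute)
      qed
      also have "exp (- (q'/4) * ln m) = m powr (- q'/4)" using m0 by (simp add: powr_def)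
      also have "\<dots> \<le> t powr (- q')"
      proof -
        have "\<eta> powr (- q') \<ge> 1" using eta q' by (simp add: powr_minus one_le_inverse powr_le1)
        then show ?thesis unfolding tq using m0 by (simp add: mult_le_cancel_right1)
      qed
      finally have "m * p1^L \<le> m * t powr (- q')" using m0 by simp
      also have "\<dots> \<le> W" unfolding W_def using lmq m0 t0 by simp
      finally show ?thesis .
    qed
    have T2: "m * ((2 * real L + 1) * (c * (t / (real L + 1)) powr (- q))) \<le> c * W"
    proof -
      have d0: "0 < \<delta>" using \<delta>def q' by simp
      have e1: "(t / (real L + 1)) powr (- q) = (real L + 1) powr q * t powr (- q)"
      proof -
        have a: "(t / (real L + 1)) powr (- q) = t powr (- q) / (real L + 1) powr (- q)" by (rule powr_divide)
        have b: "(real L + 1) powr (- q) = inverse ((real L + 1) powr q)" by (rule powr_minus)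
        have c: "(real L + 1) powr q > 0" by simp
        show ?thesis unfolding a b using c by (simp add: divide_inverse)
      qed
      have e2: "t powr (- q) = t powr (- q') * t powr (- (q - q'))"
        using powr_add[of t "- q'" "- (q - q')"] by simp
      have e3: "t powr (- (q - q')) \<le> m powr (- \<delta>)"
      proof -
        have "t powr (q - q') = (t powr q') powr \<delta>" unfolding \<delta>def using q' by (simp add: powr_powr)
        also have "\<dots> \<ge> m powr \<delta>" using tbig d0 m0 by (intro powr_mono2) auto
        finally have "m powr \<delta> \<le> t powr (q - q')" .
        then have "inverse (t powr (q - q')) \<le> inverse (m powr \<delta>)"
          using m0 by (intro le_imp_inverse_le) auto
        moreover have "t powr (- (q - q')) = inverse (t powr (q - q'))" by (rule powr_minus)
        moreover have "m powr (- \<delta>) = inverse (m powr \<delta>)" by (rule powr_minus)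
        ultimately show ?thesis by simp
      qed
      have l1: "real L + 1 \<le> (A + 2) * ln m" using L2 lm by (simp add: algebra_simps)
      have l2: "2 * real L + 1 \<le> (2*A + 3) * ln m" using L2 lm by (simp add: algebra_simps)
      have pq: "(real L + 1) powr q \<le> (A + 2) powr q * ln m powr q"
        using l1 q' by (subst powr_mult[symmetric]) (auto intro!: powr_mono2)
      have "(2 * real L + 1) * (real L + 1) powr q \<le> ((2*A + 3) * ln m) * ((A + 2) powr q * ln m powr q)"
        using l2 pq by (intro mult_mono) auto
      also have "\<dots> = Kc * ln m powr (q + 1)"
        unfolding Kcdef using lm by (simp add: powr_add algebra_simps)
      finally have poly: "(2 * real L + 1) * (real L + 1) powr q \<le> Kc * ln m powr (q + 1)" .
      have Kc0: "0 < Kc" unfolding Kcdef using A0 by simp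
      have "m * ((2 * real L + 1) * (c * (t / (real L + 1)) powr (- q)))
          = c * (m * t powr (- q')) * (((2 * real L + 1) * (real L + 1) powr q) * t powr (- (q - q')))"
        unfolding e1 e2 by (simp add: algebra_simps)
      also have "\<dots> \<le> c * (m * t powr (- q')) * ((Kc * ln m powr (q + 1)) * m powr (- \<delta>))"
      proof -
        have Kc0': "0 < Kc" unfolding Kcdef using A0 by simp
        have "((2 * real L + 1) * (real L + 1) powr q) * t powr (- (q - q')) \<le> (Kc * ln m powr (q + 1)) * m powr (- \<delta>)"
          by (rule mult_mono[OF poly e3]) (use Kc0' in auto)
        then show ?thesis using c0 m0 t0 by (intro mult_left_mono) auto
      qed
      also have "\<dots> \<le> c * (m * t powr (- q')) * 1"
      proof -
        have "(Kc * ln m powr (q + 1)) * m powr (- \<delta>) \<le> Kc * (1 / Kc)"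
          using mult_left_mono[OF ev, of Kc] Kc0 by (simp add: mult.assoc)
        then show ?thesis using Kc0 c0 m0 t0 by (intro mult_left_mono) auto
      qed
      also have "\<dots> \<le> c * W"
      proof -
        have "(m * t powr (- q')) * 1 \<le> (m * t powr (- q')) * ln m powr (q'/2)"
          using lmq m0 t0 by (intro mult_left_mono) auto
        then show ?thesis unfolding W_def using c0 by (simp add: mult_left_mono)
      qed
      finally show ?thesis .
    qed
    have "P \<le> m * p1^L + m * ((2 * real L + 1) * (c * (t / (real L + 1)) powr (- q)))"
      using Pb by (simp add: algebra_simps)
    also have "\<dots> \<le> W + c * W" using T1 T2 by simp
    also have "\<dots> \<le> (c + 2) * W" using W0 by (simp add: algebra_simps)
    finally have "P \<le> (c + 2) * W" .
    then show ?thesis by (subst R)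
  qed
qed


lemma lim_aux:
  fixes r d :: real
  assumes "r > 0" "d > 0"
  shows "((\<lambda>x. (ln x) powr r * x powr (-d)) \<longlongrightarrow> 0) at_top"
  using assms by real_asymp

theorem mainTheorem8:
  fixes \<mu> :: "nat pmf" and \<theta> :: "(int ^ 'd) pmf" and q q' :: real
  assumes mean: "measure_pmf.expectation \<mu> real = 1"
    and var_fin: "integrable (measure_pmf \<mu>) (\<lambda>k. (real k)^2)"
    and var_pos: "measure_pmf.variance \<mu> real > 0"
    and sym: "\<forall>y. pmf \<theta> (- y) = pmf \<theta> y"
    and irr: "brw_irreducible \<theta>"
    and tail: "\<exists>c. \<forall>r>0. measure_pmf.prob \<theta> {y. norm (rv y) \<ge> r} \<le> c * r powr (- q)"
    and q: "q > 4" and q'1: "4 < q'" and q'2: "q' < q"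
  shows "\<exists>C'>0. \<exists>m0\<ge>(1::nat). \<forall>m\<ge>m0. \<forall>\<eta>::real. 0 < \<eta> \<and> \<eta> < 1 \<longrightarrow>
     measure (bt_space \<mu> \<theta>)
       {\<omega> \<in> space (bt_space \<mu> \<theta>).
          Max ((\<lambda>z. infdist (rv z) (rv ` RY 0 \<omega> m)) ` RX 0 \<omega> m) \<ge> \<eta> * real m powr (1/4)}
     \<le> C' * \<eta> powr (- q') * real m powr (1 - q' / 4) * ln (real m) powr (q' / 2)"
proof -
  have mh: "mu_hyp \<mu>" unfolding mu_hyp_def using mean var_pos by simp
  obtain K where K: "K \<ge> 2" "pmf \<mu> K > 0" using mu_hyp.muK[OF mh] by auto
  obtain c where c: "\<And>r. r > 0 \<Longrightarrow> measure_pmf.prob \<theta> {y. norm (rv y) \<ge> r} \<le> c * r powr (- q)"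
    using tail by auto
  have c0: "0 \<le> c"
  proof -
    have "measure_pmf.prob \<theta> {y. norm (rv y) \<ge> 1} \<le> c" using c[of 1] by simp
    moreover have "0 \<le> measure_pmf.prob \<theta> {y. norm (rv y) \<ge> 1}" by (rule measure_nonneg)
    ultimately show ?thesis by linarith
  qed
  define p1 where "p1 = max (1 - pmf \<mu> K) (1/2)"
  have p1: "0 < p1" "p1 < 1" unfolding p1_def using K by auto
  have pK0: "0 \<le> 1 - pmf \<mu> K" using pmf_le_1[of \<mu> K] by simp
  define A where "A = (q'/4) / (- ln p1)"
  define \<delta> where "\<delta> = (q - q') / q'"
  define Kc where "Kc = (2*A+3) * (A+2) powr q"
  have A0: "0 < A" unfolding A_def using p1 q'1 by (intro divide_pos_pos) auto
  have Kc0: "0 < Kc" unfolding Kc_def using A0 by simp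
  have d0: "0 < \<delta>" unfolding \<delta>_def using q'1 q'2 by simp
  have "((\<lambda>x. (ln x) powr (q+1) * x powr (-\<delta>)) \<longlongrightarrow> 0) at_top"
    using q d0 by (intro lim_aux) auto
  then have "eventually (\<lambda>x. (ln x) powr (q+1) * x powr (-\<delta>) < 1 / Kc) at_top"
    using Kc0 by (intro order_tendstoD(2)) auto
  then obtain x0 where x0: "\<And>x. x \<ge> x0 \<Longrightarrow> (ln x) powr (q+1) * x powr (-\<delta>) < 1 / Kc"
    unfolding eventually_at_top_linorder by auto
  define m0 where "m0 = max (nat \<lceil>x0\<rceil>) (nat \<lceil>exp (1::real)\<rceil>) + 1"
  show ?thesis
  proof (intro exI[of _ "c + 2"] conjI exI[of _ m0] allI impI)
    show "0 < c + 2" using c0 by simp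
    show "1 \<le> m0" unfolding m0_def by simp
    fix m :: nat and \<eta> :: real
    assume m: "m0 \<le> m" and eta: "0 < \<eta> \<and> \<eta> < 1"
    have a0: "max (nat \<lceil>x0\<rceil>) (nat \<lceil>exp (1::real)\<rceil>) \<le> m"
    proof -
      have "max (nat \<lceil>x0\<rceil>) (nat \<lceil>exp (1::real)\<rceil>) \<le> m0" unfolding m0_def by arith
      then show ?thesis using m by linarith
    qed
    then have a1: "nat \<lceil>x0\<rceil> \<le> m" "nat \<lceil>exp (1::real)\<rceil> \<le> m" by (simp_all only: max.bounded_iff)
    have mx0: "x0 \<le> real m" using real_nat_ceiling_ge[of x0] a1(1) by linarith
    have me: "exp (1::real) \<le> real m" using real_nat_ceiling_ge[of "exp (1::real)"] a1(2) by linarith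
    have lm: "1 \<le> ln (real m)"
      using me by (metis exp_gt_zero ln_exp ln_le_cancel_iff order_less_le_trans)
    have "1 \<le> m0" unfolding m0_def by simp
    then have m1: "1 \<le> real m" using m by linarith
    define t where "t = \<eta> * real m powr (1/4)"
    have t0: "0 < t" unfolding t_def using eta m1 by simp
    define L where "L = nat \<lceil>A * ln (real m)\<rceil>"
    have Ln: "0 \<le> A * ln (real m)" using A0 lm by simp
    have L1: "A * ln (real m) \<le> real L" unfolding L_def using Ln by linarith
    have L2: "real L \<le> A * ln (real m) + 1" unfolding L_def using Ln by linarith
    define B where "B = c * (t / (real L + 1)) powr (- q)"
    have tl: "measure (measure_pmf \<theta>) {y. t / (real L + 1) \<le> norm (rv y)} \<le> B"
      unfolding B_def using c[of "t / (real L + 1)"] t0 by simp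
    let ?P = "measure (bt_space \<mu> \<theta>)
       {\<omega> \<in> space (bt_space \<mu> \<theta>). Max ((\<lambda>z. infdist (rv z) (rv ` RY 0 \<omega> m)) ` RX 0 \<omega> m) \<ge> t}"
    have Pb0: "?P \<le> real m * ((1 - pmf \<mu> K)^L + (2 * real L + 1) * B)"
      by (rule prob_bound[OF mh K(1) tl t0])
    have "(1 - pmf \<mu> K)^L \<le> p1^L" unfolding p1_def using pK0 by (intro power_mono) auto
    then have Pb: "?P \<le> real m * (p1^L + (2 * real L + 1) * (c * (t / (real L + 1)) powr (- q)))"
      using Pb0 m1 unfolding B_def by (smt (verit) mult_left_mono)
    have P1: "?P \<le> 1" by (rule prob_space.prob_le_1[OF ps_bt])
    have ev: "ln (real m) powr (q+1) * real m powr (-\<delta>) \<le> 1 / Kc" using x0[OF mx0] by simp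
    have "?P \<le> (c + 2) * \<eta> powr (- q') * real m powr (1 - q' / 4) * ln (real m) powr (q' / 2)"
      by (rule final_arith[OF m1 lm _ _ t_def P1 Pb c0 q'1 q'2 p1 L1 L2 A_def \<delta>_def Kc_def ev]) (use eta in auto)
    then show "measure (bt_space \<mu> \<theta>)
       {\<omega> \<in> space (bt_space \<mu> \<theta>).
          Max ((\<lambda>z. infdist (rv z) (rv ` RY 0 \<omega> m)) ` RX 0 \<omega> m) \<ge> \<eta> * real m powr (1/4)}
     \<le> (c + 2) * \<eta> powr (- q') * real m powr (1 - q' / 4) * ln (real m) powr (q' / 2)"
      unfolding t_def .
  qed
qed


end
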